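(* Let $A$ be a braided group in $\mathcal C$ with invertible antipode $S$ (inverse $S^-$), and let $(Y,\mu_r,\Delta_r)$ be a right crossed module over $A$. Put $\sigma_{Y/A}:=\mu_r\circ(Y\otimes S)\circ\Delta_r$ and $\sigma^-_{Y/A}:=\mu_r\circ\Psi^{-1}_{Y,A}\circ(S^-\circ S^-\otimes Y)\circ\Psi^{-1}_{A,Y}\circ\Delta_r$. Then $\sigma_{Y/A}$ is invertible with inverse $\sigma^-_{Y/A}$, and $\sigma_{Y/A}$ is a morphism of left $A$-modules and left $A$-comodules (hence of left crossed modules) from $(Y,\ \mu_r\circ\Psi^{-1}_{Y,A}\circ(S^-\otimes Y),\ (S\otimes Y)\circ\Psi_{Y,A}\circ\Delta_r)$ to $(Y,\ \mu_r\circ\Psi_{A,Y}\circ(S\otimes Y),\ (S^-\otimes Y)\circ\Psi^{-1}_{A,Y}\circ\Delta_r)$.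
   Context: $\mathcal C$ is a braided monoidal category, assumed strict, with tensor product $\otimes$, unit $\underline 1$ and invertible braiding $\Psi_{X,Y}:X\otimes Y\to Y\otimes X$. Inside tensor products of morphisms an object name $X$ stands for ${\rm id}_X$. A braided group is a bialgebra $(A,\mu,\eta,\Delta,\epsilon)$ in $\mathcal C$ (with $\Delta\circ\mu=(\mu\otimes\mu)\circ(A\otimes\Psi_{A,A}\otimes A)\circ(\Delta\otimes\Delta)$, $\Delta\circ\eta=\eta\otimes\eta$, $\epsilon\circ\mu=\epsilon\otimes\epsilon$, $\epsilon\circ\eta={\rm id}_{\underline 1}$) with antipode $S$: $\mu\circ(S\otimes A)\circ\Delta=\eta\circ\epsilon=\mu\circ(A\otimes S)\circ\Delta$. A right crossed module over $A$ is a right $A$-module $\mu_r:Y\otimes A\to Y$ and right $A$-comodule $\Delta_r:Y\to Y\otimes A$ such that $(Y\otimes\mu)\circ(\Psi_{A,Y}\otimes A)\circ(A\otimes(\Delta_r\circ\mu_r))\circ(\Psi_{Y,A}\otimes A)\circ(Y\otimes\Delta)=(\mu_r\otimes\mu)\circ(Y\otimes\Psi_{A,A}\otimes A)\circ(\Delta_r\otimes\Delta)$. *)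

theory Defs
  imports Main
begin

text \<open>A (small-data presentation of a) strict braided monoidal category:
  objects of type 'o, morphisms of type 'm, with domain/codomain, a predicate
  singling out the genuine arrows, composition (Cmp g f = g o f), identities,
  the tensor product on objects (TO) and on morphisms (TM), the unit object,
  the braiding Br X Y : X (x) Y -> Y (x) X and its inverse BrInv X Y : Y (x) X -> X (x) Y.\<close>

record ('o, 'm) bmcat =
  Dom :: "'m \<Rightarrow> 'o"
  Cod :: "'m \<Rightarrow> 'o"
  Arr :: "'m \<Rightarrow> bool"
  Cmp :: "'m \<Rightarrow> 'm \<Rightarrow> 'm"
  Id :: "'o \<Rightarrow> 'm"
  TO :: "'o \<Rightarrow> 'o \<Rightarrow> 'o"
  TM :: "'m \<Rightarrow> 'm \<Rightarrow> 'm"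
  Unit :: "'o"
  Br :: "'o \<Rightarrow> 'o \<Rightarrow> 'm"
  BrInv :: "'o \<Rightarrow> 'o \<Rightarrow> 'm"

definition Hom :: "('o, 'm) bmcat \<Rightarrow> 'm \<Rightarrow> 'o \<Rightarrow> 'o \<Rightarrow> bool" where
  "Hom C f X Y \<longleftrightarrow> Arr C f \<and> Dom C f = X \<and> Cod C f = Y"

definition braided_strict_monoidal :: "('o, 'm) bmcat \<Rightarrow> bool" where
  "braided_strict_monoidal C \<longleftrightarrow>
    \<comment> \<open>category\<close>
    (\<forall>X. Hom C (Id C X) X X) \<and>
    (\<forall>f g. Arr C f \<and> Arr C g \<and> Dom C g = Cod C f \<longrightarrow> Hom C (Cmp C g f) (Dom C f) (Cod C g)) \<and>
    (\<forall>f. Arr C f \<longrightarrow> Cmp C f (Id C (Dom C f)) = f \<and> Cmp C (Id C (Cod C f)) f = f) \<and>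
    (\<forall>f g h. Arr C f \<and> Arr C g \<and> Arr C h \<and> Dom C g = Cod C f \<and> Dom C h = Cod C g \<longrightarrow>
        Cmp C h (Cmp C g f) = Cmp C (Cmp C h g) f) \<and>
    \<comment> \<open>tensor bifunctor\<close>
    (\<forall>f g. Arr C f \<and> Arr C g \<longrightarrow>
        Hom C (TM C f g) (TO C (Dom C f) (Dom C g)) (TO C (Cod C f) (Cod C g))) \<and>
    (\<forall>X Y. TM C (Id C X) (Id C Y) = Id C (TO C X Y)) \<and>
    (\<forall>f g f' g'. Arr C f \<and> Arr C g \<and> Arr C f' \<and> Arr C g' \<and> Dom C g = Cod C f \<and> Dom C g' = Cod C f' \<longrightarrow>
        TM C (Cmp C g f) (Cmp C g' f') = Cmp C (TM C g g') (TM C f f')) \<and>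
    \<comment> \<open>strictness\<close>
    (\<forall>X Y Z. TO C (TO C X Y) Z = TO C X (TO C Y Z)) \<and>
    (\<forall>X. TO C (Unit C) X = X \<and> TO C X (Unit C) = X) \<and>
    (\<forall>f g h. Arr C f \<and> Arr C g \<and> Arr C h \<longrightarrow> TM C (TM C f g) h = TM C f (TM C g h)) \<and>
    (\<forall>f. Arr C f \<longrightarrow> TM C (Id C (Unit C)) f = f \<and> TM C f (Id C (Unit C)) = f) \<and>
    \<comment> \<open>invertible braiding\<close>
    (\<forall>X Y. Hom C (Br C X Y) (TO C X Y) (TO C Y X)) \<and>
    (\<forall>X Y. Hom C (BrInv C X Y) (TO C Y X) (TO C X Y)) \<and>
    (\<forall>X Y. Cmp C (Br C X Y) (BrInv C X Y) = Id C (TO C Y X) \<and>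
           Cmp C (BrInv C X Y) (Br C X Y) = Id C (TO C X Y)) \<and>
    (\<forall>f g. Arr C f \<and> Arr C g \<longrightarrow>
        Cmp C (Br C (Cod C f) (Cod C g)) (TM C f g) = Cmp C (TM C g f) (Br C (Dom C f) (Dom C g))) \<and>
    (\<forall>X Y Z. Br C X (TO C Y Z) = Cmp C (TM C (Id C Y) (Br C X Z)) (TM C (Br C X Y) (Id C Z))) \<and>
    (\<forall>X Y Z. Br C (TO C X Y) Z = Cmp C (TM C (Br C X Z) (Id C Y)) (TM C (Id C X) (Br C Y Z)))"

definition bialgebra :: "('o, 'm) bmcat \<Rightarrow> 'o \<Rightarrow> 'm \<Rightarrow> 'm \<Rightarrow> 'm \<Rightarrow> 'm \<Rightarrow> bool" where
  "bialgebra C A mu eta Delta eps \<longleftrightarrow>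
    Hom C mu (TO C A A) A \<and> Hom C eta (Unit C) A \<and>
    Hom C Delta A (TO C A A) \<and> Hom C eps A (Unit C) \<and>
    Cmp C mu (TM C mu (Id C A)) = Cmp C mu (TM C (Id C A) mu) \<and>
    Cmp C mu (TM C eta (Id C A)) = Id C A \<and> Cmp C mu (TM C (Id C A) eta) = Id C A \<and>
    Cmp C (TM C Delta (Id C A)) Delta = Cmp C (TM C (Id C A) Delta) Delta \<and>
    Cmp C (TM C eps (Id C A)) Delta = Id C A \<and> Cmp C (TM C (Id C A) eps) Delta = Id C A \<and>
    Cmp C Delta mu =
      Cmp C (TM C mu mu) (Cmp C (TM C (Id C A) (TM C (Br C A A) (Id C A))) (TM C Delta Delta)) \<and>
    Cmp C Delta eta = TM C eta eta \<and>
    Cmp C eps mu = TM C eps eps \<and>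
    Cmp C eps eta = Id C (Unit C)"

definition braided_group :: "('o, 'm) bmcat \<Rightarrow> 'o \<Rightarrow> 'm \<Rightarrow> 'm \<Rightarrow> 'm \<Rightarrow> 'm \<Rightarrow> 'm \<Rightarrow> bool" where
  "braided_group C A mu eta Delta eps S \<longleftrightarrow>
    bialgebra C A mu eta Delta eps \<and> Hom C S A A \<and>
    Cmp C mu (Cmp C (TM C S (Id C A)) Delta) = Cmp C eta eps \<and>
    Cmp C mu (Cmp C (TM C (Id C A) S) Delta) = Cmp C eta eps"

definition right_module :: "('o, 'm) bmcat \<Rightarrow> 'o \<Rightarrow> 'm \<Rightarrow> 'm \<Rightarrow> 'o \<Rightarrow> 'm \<Rightarrow> bool" where
  "right_module C A mu eta Y mur \<longleftrightarrow>
    Hom C mur (TO C Y A) Y \<and>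
    Cmp C mur (TM C mur (Id C A)) = Cmp C mur (TM C (Id C Y) mu) \<and>
    Cmp C mur (TM C (Id C Y) eta) = Id C Y"

definition right_comodule :: "('o, 'm) bmcat \<Rightarrow> 'o \<Rightarrow> 'm \<Rightarrow> 'm \<Rightarrow> 'o \<Rightarrow> 'm \<Rightarrow> bool" where
  "right_comodule C A Delta eps Y Dr \<longleftrightarrow>
    Hom C Dr Y (TO C Y A) \<and>
    Cmp C (TM C Dr (Id C A)) Dr = Cmp C (TM C (Id C Y) Delta) Dr \<and>
    Cmp C (TM C (Id C Y) eps) Dr = Id C Y"

definition right_crossed_module ::
  "('o, 'm) bmcat \<Rightarrow> 'o \<Rightarrow> 'm \<Rightarrow> 'm \<Rightarrow> 'm \<Rightarrow> 'm \<Rightarrow> 'o \<Rightarrow> 'm \<Rightarrow> 'm \<Rightarrow> bool" where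
  "right_crossed_module C A mu eta Delta eps Y mur Dr \<longleftrightarrow>
    right_module C A mu eta Y mur \<and> right_comodule C A Delta eps Y Dr \<and>
    Cmp C (TM C (Id C Y) mu)
      (Cmp C (TM C (Br C A Y) (Id C A))
        (Cmp C (TM C (Id C A) (Cmp C Dr mur))
          (Cmp C (TM C (Br C Y A) (Id C A)) (TM C (Id C Y) Delta))))
    = Cmp C (TM C mur mu) (Cmp C (TM C (Id C Y) (TM C (Br C A A) (Id C A))) (TM C Dr Delta))"

end

theory Submission
  imports Defs
begin


datatype ('o,'m) lay = L "'o list" 'm "'o list" "'o list" "'o list"

fun lay_dom where "lay_dom (L p g s t q) = p @ s @ q"
fun lay_cod where "lay_cod (L p g s t q) = p @ t @ q"
fun lpre where "lpre (L p g s t q) = p"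
fun lpost where "lpost (L p g s t q) = q"

definition obj :: "('o,'m) bmcat \<Rightarrow> 'o list \<Rightarrow> 'o" where
  "obj C xs = foldr (TO C) xs (Unit C)"

fun layer :: "('o,'m) bmcat \<Rightarrow> ('o,'m) lay \<Rightarrow> 'm" where
  "layer C (L p g s t q) = TM C (Id C (obj C p)) (TM C g (Id C (obj C q)))"

fun okl :: "('o,'m) bmcat \<Rightarrow> ('o,'m) lay \<Rightarrow> bool" where
  "okl C (L p g s t q) = Hom C g (obj C s) (obj C t)"

fun wfc :: "('o,'m) bmcat \<Rightarrow> 'o list \<Rightarrow> ('o,'m) lay list \<Rightarrow> bool" where
  "wfc C X [] = True"
| "wfc C X (l # ls) = (okl C l \<and> lay_dom l = X \<and> wfc C (lay_cod l) ls)"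

fun endc :: "'o list \<Rightarrow> ('o,'m) lay list \<Rightarrow> 'o list" where
  "endc X [] = X"
| "endc X (l # ls) = endc (lay_cod l) ls"

fun sem :: "('o,'m) bmcat \<Rightarrow> 'o list \<Rightarrow> ('o,'m) lay list \<Rightarrow> 'm" where
  "sem C X [] = Id C (obj C X)"
| "sem C X (l # ls) = Cmp C (sem C (lay_cod l) ls) (layer C l)"

fun wl where "wl P Q (L p g s t q) = L (P @ p) g s t (q @ Q)"

definition whisk where "whisk P Q ls = map (wl P Q) ls"

definition leq :: "('o,'m) bmcat \<Rightarrow> 'o list \<Rightarrow> ('o,'m) lay list \<Rightarrow> ('o,'m) lay list \<Rightarrow> bool" where
  "leq C X0 a b \<longleftrightarrow> wfc C X0 a \<and> wfc C X0 b \<and> endc X0 a = endc X0 b \<and> sem C X0 a = sem C X0 b"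

fun brR :: "('o,'m) bmcat \<Rightarrow> 'o list \<Rightarrow> 'o \<Rightarrow> ('o,'m) lay list" where
  "brR C [] Z = []"
| "brR C (x # xs) Z = whisk [x] [] (brR C xs Z) @ [L [] (Br C x Z) [x, Z] [Z, x] xs]"
fun brL :: "('o,'m) bmcat \<Rightarrow> 'o \<Rightarrow> 'o list \<Rightarrow> ('o,'m) lay list" where
  "brL C Z [] = []"
| "brL C Z (x # xs) = [L [] (Br C Z x) [Z, x] [x, Z] xs] @ whisk [x] [] (brL C Z xs)"
fun ibrR :: "('o,'m) bmcat \<Rightarrow> 'o list \<Rightarrow> 'o \<Rightarrow> ('o,'m) lay list" where
  "ibrR C [] Z = []"
| "ibrR C (x # xs) Z = [L [] (BrInv C x Z) [Z, x] [x, Z] xs] @ whisk [x] [] (ibrR C xs Z)"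
fun ibrL :: "('o,'m) bmcat \<Rightarrow> 'o \<Rightarrow> 'o list \<Rightarrow> ('o,'m) lay list" where
  "ibrL C Z [] = []"
| "ibrL C Z (x # xs) = whisk [x] [] (ibrL C Z xs) @ [L [] (BrInv C Z x) [x, Z] [Z, x] xs]"


fun ntrip :: "('o,'m) bmcat \<Rightarrow> nat \<Rightarrow> 'm \<Rightarrow> 'o list \<Rightarrow> 'o list \<Rightarrow> 'o \<Rightarrow> 'o list \<times> ('o,'m) lay list \<times> ('o,'m) lay list" where
  "ntrip C k g s t Z = (if k = 0 then (s @ [Z], L [] g s t [Z] # brR C t Z, brR C s Z @ [L [Z] g s t []])
     else if k = 1 then (Z # s, L [Z] g s t [] # brL C Z t, brL C Z s @ [L [] g s t [Z]])
     else if k = 2 then (Z # s, L [Z] g s t [] # ibrR C t Z, ibrR C s Z @ [L [] g s t [Z]])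
     else (s @ [Z], L [] g s t [Z] # ibrL C Z t, ibrL C Z s @ [L [Z] g s t []]))"

fun rv where "rv (X0, a, b) = (X0, b, a)"

definition ntr where "ntr C k b g s t Z = (if b then ntrip C k g s t Z else rv (ntrip C k g s t Z))"

datatype ('o,'m) step =
    F nat "'o list \<times> ('o,'m) lay list \<times> ('o,'m) lay list"
  | G nat "'o list" "'o list" "'o list \<times> ('o,'m) lay list \<times> ('o,'m) lay list"
  | SW nat
  | N nat nat bool 'm "'o list" "'o list" 'o

fun indepR where
  "indepR (L p1 g1 s1 t1 q1) (L p2 g2 s2 t2 q2) =
     (let m = drop (length p1 + length t1) p2 in p2 = p1 @ t1 @ m \<and> q1 = m @ s2 @ q2)"
fun indepL where
  "indepL (L p1 g1 s1 t1 q1) (L p2 g2 s2 t2 q2) =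
     (let m = drop (length p2 + length s2) p1 in p1 = p2 @ s2 @ m \<and> q2 = m @ t1 @ q1)"
fun swR where
  "swR (L p1 g1 s1 t1 q1) (L p2 g2 s2 t2 q2) =
     (let m = drop (length p1 + length t1) p2 in [L (p1 @ s1 @ m) g2 s2 t2 q2, L p1 g1 s1 t1 (m @ t2 @ q2)])"
fun swL where
  "swL (L p1 g1 s1 t1 q1) (L p2 g2 s2 t2 q2) =
     (let m = drop (length p2 + length s2) p1 in [L p2 g2 s2 t2 (m @ s1 @ q1), L (p2 @ t2 @ m) g1 s1 t1 q1])"

fun autoP where "autoP l l0 = take (length (lpre l) - length (lpre l0)) (lpre l)"
fun autoQ where "autoQ l l0 = drop (length (lpost l0)) (lpost l)"

fun appF :: "nat \<Rightarrow> 'o list \<times> ('o,'m) lay list \<times> ('o,'m) lay list \<Rightarrow> ('o,'m) lay list \<Rightarrow> ('o,'m) lay list" where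
  "appF n (X0, a, b) Ls = take n Ls @ whisk (autoP (Ls ! n) (hd a)) (autoQ (Ls ! n) (hd a)) b @ drop (n + length a) Ls"

fun posF :: "'o list \<Rightarrow> nat \<Rightarrow> 'o list \<times> ('o,'m) lay list \<times> ('o,'m) lay list \<Rightarrow> ('o,'m) lay list \<Rightarrow> bool" where
  "posF X n (X0, a, b) Ls = (a \<noteq> [] \<and> n < length Ls \<and>
      take (length a) (drop n Ls) = whisk (autoP (Ls ! n) (hd a)) (autoQ (Ls ! n) (hd a)) a \<and>
      endc X (take n Ls) = autoP (Ls ! n) (hd a) @ X0 @ autoQ (Ls ! n) (hd a))"

fun app :: "('o,'m) bmcat \<Rightarrow> ('o,'m) step \<Rightarrow> ('o,'m) lay list \<Rightarrow> ('o,'m) lay list" where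
  "app C (F n tr) Ls = appF n tr Ls"
| "app C (G n P Q (X0, a, b)) Ls = take n Ls @ whisk P Q b @ drop (n + length a) Ls"
| "app C (SW n) Ls = take n Ls @ (if indepR (Ls ! n) (Ls ! Suc n) then swR (Ls ! n) (Ls ! Suc n) else swL (Ls ! n) (Ls ! Suc n)) @ drop (Suc (Suc n)) Ls"
| "app C (N n k b g s t Z) Ls = appF n (ntr C k b g s t Z) Ls"

fun ok :: "('o,'m) bmcat \<Rightarrow> 'o list \<Rightarrow> ('o,'m) step \<Rightarrow> ('o,'m) lay list \<Rightarrow> bool" where
  "ok C X (F n (X0, a, b)) Ls = (posF X n (X0, a, b) Ls \<and> (leq C X0 a b \<or> leq C X0 b a))"
| "ok C X (G n P Q (X0, a, b)) Ls = (n \<le> length Ls \<and>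
      take (length a) (drop n Ls) = whisk P Q a \<and>
      endc X (take n Ls) = P @ X0 @ Q \<and>
      (leq C X0 a b \<or> leq C X0 b a))"
| "ok C X (SW n) Ls = (Suc n < length Ls \<and> (indepR (Ls ! n) (Ls ! Suc n) \<or> indepL (Ls ! n) (Ls ! Suc n)))"
| "ok C X (N n k b g s t Z) Ls = (Hom C g (obj C s) (obj C t) \<and> posF X n (ntr C k b g s t Z) Ls)"

fun run where
  "run C [] Ls = Ls"
| "run C (st # sts) Ls = run C sts (app C st Ls)"

fun valid where
  "valid C X [] Ls = True"
| "valid C X (st # sts) Ls = (wfc C X Ls \<and> ok C X st Ls \<and> wfc C X (app C st Ls) \<and> valid C X sts (app C st Ls))"

locale bsm =
  fixes C :: "('o,'m) bmcat"
  assumes bsm: "braided_strict_monoidal C"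
begin

lemma hom_id: "Hom C (Id C X) X X" using bsm unfolding braided_strict_monoidal_def by (elim conjE; metis)
lemma hom_cmp: "Arr C f \<Longrightarrow> Arr C g \<Longrightarrow> Dom C g = Cod C f \<Longrightarrow> Hom C (Cmp C g f) (Dom C f) (Cod C g)"
  using bsm unfolding braided_strict_monoidal_def by (elim conjE; metis)
lemma id_r: "Arr C f \<Longrightarrow> Cmp C f (Id C (Dom C f)) = f" using bsm unfolding braided_strict_monoidal_def by (elim conjE; metis)
lemma id_l: "Arr C f \<Longrightarrow> Cmp C (Id C (Cod C f)) f = f" using bsm unfolding braided_strict_monoidal_def by (elim conjE; metis)
lemma cmp_assoc: "Arr C f \<Longrightarrow> Arr C g \<Longrightarrow> Arr C h \<Longrightarrow> Dom C g = Cod C f \<Longrightarrow> Dom C h = Cod C g \<Longrightarrow>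
        Cmp C h (Cmp C g f) = Cmp C (Cmp C h g) f" using bsm unfolding braided_strict_monoidal_def by (elim conjE; metis)
lemma hom_tm: "Arr C f \<Longrightarrow> Arr C g \<Longrightarrow> Hom C (TM C f g) (TO C (Dom C f) (Dom C g)) (TO C (Cod C f) (Cod C g))"
  using bsm unfolding braided_strict_monoidal_def by (elim conjE; metis)
lemma tm_id: "TM C (Id C X) (Id C Y) = Id C (TO C X Y)" using bsm unfolding braided_strict_monoidal_def by (elim conjE; metis)
lemma interchange: "Arr C f \<Longrightarrow> Arr C g \<Longrightarrow> Arr C f' \<Longrightarrow> Arr C g' \<Longrightarrow> Dom C g = Cod C f \<Longrightarrow> Dom C g' = Cod C f' \<Longrightarrow>
        TM C (Cmp C g f) (Cmp C g' f') = Cmp C (TM C g g') (TM C f f')"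
  using bsm unfolding braided_strict_monoidal_def by (elim conjE; metis)
lemma to_assoc: "TO C (TO C X Y) Z = TO C X (TO C Y Z)" using bsm unfolding braided_strict_monoidal_def by (elim conjE; metis)
lemma to_unit: "TO C (Unit C) X = X" "TO C X (Unit C) = X" using bsm unfolding braided_strict_monoidal_def by (elim conjE; metis)+
lemma tm_assoc: "Arr C f \<Longrightarrow> Arr C g \<Longrightarrow> Arr C h \<Longrightarrow> TM C (TM C f g) h = TM C f (TM C g h)"
  using bsm unfolding braided_strict_monoidal_def by (elim conjE; metis)
lemma tm_unit: "Arr C f \<Longrightarrow> TM C (Id C (Unit C)) f = f" "Arr C f \<Longrightarrow> TM C f (Id C (Unit C)) = f"
  using bsm unfolding braided_strict_monoidal_def by (elim conjE; metis)+
lemma hom_br: "Hom C (Br C X Y) (TO C X Y) (TO C Y X)" using bsm unfolding braided_strict_monoidal_def by (elim conjE; metis)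
lemma hom_bri: "Hom C (BrInv C X Y) (TO C Y X) (TO C X Y)" using bsm unfolding braided_strict_monoidal_def by (elim conjE; metis)
lemma br_inv: "Cmp C (Br C X Y) (BrInv C X Y) = Id C (TO C Y X)" "Cmp C (BrInv C X Y) (Br C X Y) = Id C (TO C X Y)"
  using bsm unfolding braided_strict_monoidal_def by (elim conjE; metis)+
lemma br_nat: "Arr C f \<Longrightarrow> Arr C g \<Longrightarrow>
        Cmp C (Br C (Cod C f) (Cod C g)) (TM C f g) = Cmp C (TM C g f) (Br C (Dom C f) (Dom C g))"
  using bsm unfolding braided_strict_monoidal_def by (elim conjE; metis)
lemma hex1: "Br C X (TO C Y Z) = Cmp C (TM C (Id C Y) (Br C X Z)) (TM C (Br C X Y) (Id C Z))"
  using bsm unfolding braided_strict_monoidal_def by (elim conjE; metis)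
lemma hex2: "Br C (TO C X Y) Z = Cmp C (TM C (Br C X Z) (Id C Y)) (TM C (Id C X) (Br C Y Z))"
  using bsm unfolding braided_strict_monoidal_def by (elim conjE; metis)

lemma arr_id[simp]: "Arr C (Id C X)" and dom_id[simp]: "Dom C (Id C X) = X" and cod_id[simp]: "Cod C (Id C X) = X"
  using hom_id unfolding Hom_def by auto
lemma arr_cmp[simp]: "Arr C f \<Longrightarrow> Arr C g \<Longrightarrow> Dom C g = Cod C f \<Longrightarrow> Arr C (Cmp C g f)"
  and dom_cmp[simp]: "Arr C f \<Longrightarrow> Arr C g \<Longrightarrow> Dom C g = Cod C f \<Longrightarrow> Dom C (Cmp C g f) = Dom C f"
  and cod_cmp[simp]: "Arr C f \<Longrightarrow> Arr C g \<Longrightarrow> Dom C g = Cod C f \<Longrightarrow> Cod C (Cmp C g f) = Cod C g"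
  using hom_cmp unfolding Hom_def by auto
lemma arr_tm[simp]: "Arr C f \<Longrightarrow> Arr C g \<Longrightarrow> Arr C (TM C f g)"
  and dom_tm[simp]: "Arr C f \<Longrightarrow> Arr C g \<Longrightarrow> Dom C (TM C f g) = TO C (Dom C f) (Dom C g)"
  and cod_tm[simp]: "Arr C f \<Longrightarrow> Arr C g \<Longrightarrow> Cod C (TM C f g) = TO C (Cod C f) (Cod C g)"
  using hom_tm unfolding Hom_def by auto
lemma arr_br[simp]: "Arr C (Br C X Y)" "Dom C (Br C X Y) = TO C X Y" "Cod C (Br C X Y) = TO C Y X"
  using hom_br unfolding Hom_def by auto
lemma arr_bri[simp]: "Arr C (BrInv C X Y)" "Dom C (BrInv C X Y) = TO C Y X" "Cod C (BrInv C X Y) = TO C X Y"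
  using hom_bri unfolding Hom_def by auto

declare to_assoc[simp] to_unit[simp] tm_id[simp]

lemma obj_simps[simp]: "obj C [] = Unit C" "obj C (x # xs) = TO C x (obj C xs)"
  by (simp_all add: obj_def)
lemma obj_append[simp]: "obj C (xs @ ys) = TO C (obj C xs) (obj C ys)"
  by (induction xs) auto

lemma layer_hom: "okl C l \<Longrightarrow> Arr C (layer C l) \<and> Dom C (layer C l) = obj C (lay_dom l) \<and> Cod C (layer C l) = obj C (lay_cod l)"
  by (cases l) (auto simp: Hom_def)

lemma sem_hom: "wfc C X ls \<Longrightarrow> Arr C (sem C X ls) \<and> Dom C (sem C X ls) = obj C X \<and> Cod C (sem C X ls) = obj C (endc X ls)"
proof (induction ls arbitrary: X)
  case Nil then show ?case by simp
next
  case (Cons l ls)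
  then show ?case using layer_hom[of l] by auto
qed

lemma wfc_append: "wfc C X (ls1 @ ls2) = (wfc C X ls1 \<and> wfc C (endc X ls1) ls2)"
  by (induction ls1 arbitrary: X) auto
lemma endc_append: "endc X (ls1 @ ls2) = endc (endc X ls1) ls2"
  by (induction ls1 arbitrary: X) auto

lemma sem_append: "wfc C X (ls1 @ ls2) \<Longrightarrow> sem C X (ls1 @ ls2) = Cmp C (sem C (endc X ls1) ls2) (sem C X ls1)"
proof (induction ls1 arbitrary: X)
  case Nil
  then show ?case using sem_hom[of X ls2] id_r[of "sem C X ls2"] by auto
next
  case (Cons l ls1)
  have w: "okl C l" "lay_dom l = X" "wfc C (lay_cod l) (ls1 @ ls2)" using Cons.prems by auto
  have w1: "wfc C (lay_cod l) ls1" "wfc C (endc (lay_cod l) ls1) ls2" using w(3) wfc_append by auto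
  have "sem C X ((l # ls1) @ ls2) = Cmp C (sem C (lay_cod l) (ls1 @ ls2)) (layer C l)" by simp
  also have "\<dots> = Cmp C (Cmp C (sem C (endc (lay_cod l) ls1) ls2) (sem C (lay_cod l) ls1)) (layer C l)"
    using Cons.IH[OF w(3)] by simp
  also have "\<dots> = Cmp C (sem C (endc (lay_cod l) ls1) ls2) (Cmp C (sem C (lay_cod l) ls1) (layer C l))"
    using sem_hom[OF w1(1)] sem_hom[OF w1(2)] layer_hom[OF w(1)]
    by (intro cmp_assoc[symmetric]) auto
  finally show ?case by simp
qed

lemma layer_wl: "okl C l \<Longrightarrow> layer C (wl P Q l) = TM C (Id C (obj C P)) (TM C (layer C l) (Id C (obj C Q)))"
proof (cases l)
  case (L p g s t q)
  assume "okl C l"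
  then have ag: "Arr C g" using L by (simp add: Hom_def)
  have "TM C (Id C (obj C P)) (TM C (layer C l) (Id C (obj C Q)))
      = TM C (Id C (obj C P)) (TM C (TM C (Id C (obj C p)) (TM C g (Id C (obj C q)))) (Id C (obj C Q)))"
    using L by simp
  also have "\<dots> = TM C (Id C (obj C P)) (TM C (Id C (obj C p)) (TM C g (TM C (Id C (obj C q)) (Id C (obj C Q)))))"
    using ag by (simp add: tm_assoc)
  also have "\<dots> = TM C (TM C (Id C (obj C P)) (Id C (obj C p))) (TM C g (Id C (TO C (obj C q) (obj C Q))))"
    using ag tm_assoc[of "Id C (obj C P)" "Id C (obj C p)" "TM C g (Id C (TO C (obj C q) (obj C Q)))", symmetric] by simp
  also have "\<dots> = layer C (wl P Q l)" using L by simp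
  finally show ?thesis by simp
qed

lemma wfc_whisk: "wfc C X ls \<Longrightarrow> wfc C (P @ X @ Q) (whisk P Q ls)"
proof (induction ls arbitrary: X)
  case Nil then show ?case by (simp add: whisk_def)
next
  case (Cons l ls)
  then show ?case using Cons.IH[of "lay_cod l"] by (cases l) (auto simp: whisk_def)
qed

lemma endc_whisk: "endc (P @ X @ Q) (whisk P Q ls) = P @ endc X ls @ Q"
proof (induction ls arbitrary: X)
  case Nil then show ?case by (simp add: whisk_def)
next
  case (Cons l ls)
  then show ?case using Cons.IH[of "lay_cod l"] by (cases l) (auto simp: whisk_def)
qed

lemma whisk_cmp: "Arr C a \<Longrightarrow> Arr C b \<Longrightarrow> Dom C a = Cod C b \<Longrightarrow>
   Cmp C (TM C (Id C P) (TM C a (Id C Q))) (TM C (Id C P) (TM C b (Id C Q))) = TM C (Id C P) (TM C (Cmp C a b) (Id C Q))"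
proof -
  assume h: "Arr C a" "Arr C b" "Dom C a = Cod C b"
  have "TM C (Cmp C a b) (Id C Q) = TM C (Cmp C a b) (Cmp C (Id C Q) (Id C Q))"
    using id_l[of "Id C Q"] by simp
  also have "\<dots> = Cmp C (TM C a (Id C Q)) (TM C b (Id C Q))" using h by (simp add: interchange)
  finally have e1: "TM C (Cmp C a b) (Id C Q) = Cmp C (TM C a (Id C Q)) (TM C b (Id C Q))" .
  have "TM C (Id C P) (TM C (Cmp C a b) (Id C Q)) = TM C (Cmp C (Id C P) (Id C P)) (Cmp C (TM C a (Id C Q)) (TM C b (Id C Q)))"
    using id_l[of "Id C P"] e1 by simp
  also have "\<dots> = Cmp C (TM C (Id C P) (TM C a (Id C Q))) (TM C (Id C P) (TM C b (Id C Q)))"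
    using h by (simp add: interchange)
  finally show ?thesis by simp
qed

lemma sem_whisk: "wfc C X ls \<Longrightarrow> sem C (P @ X @ Q) (whisk P Q ls) = TM C (Id C (obj C P)) (TM C (sem C X ls) (Id C (obj C Q)))"
proof (induction ls arbitrary: X)
  case Nil then show ?case by (simp add: whisk_def)
next
  case (Cons l ls)
  have w: "okl C l" "lay_dom l = X" "wfc C (lay_cod l) ls" using Cons.prems by auto
  have cw: "lay_cod (wl P Q l) = P @ lay_cod l @ Q" by (cases l) auto
  have "sem C (P @ X @ Q) (whisk P Q (l # ls)) = Cmp C (sem C (P @ lay_cod l @ Q) (whisk P Q ls)) (layer C (wl P Q l))"
    by (simp add: whisk_def cw)
  also have "\<dots> = Cmp C (TM C (Id C (obj C P)) (TM C (sem C (lay_cod l) ls) (Id C (obj C Q))))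
                  (TM C (Id C (obj C P)) (TM C (layer C l) (Id C (obj C Q))))"
    using Cons.IH[OF w(3)] layer_wl[OF w(1)] by simp
  also have "\<dots> = TM C (Id C (obj C P)) (TM C (Cmp C (sem C (lay_cod l) ls) (layer C l)) (Id C (obj C Q)))"
    using sem_hom[OF w(3)] layer_hom[OF w(1)] by (intro whisk_cmp) auto
  finally show ?case by simp
qed

lemma ctx_rw:
  assumes "wfc C X Ls" "wfc C X Ls'" "Ls = pre @ whisk P Q a @ post" "Ls' = pre @ whisk P Q b @ post"
    "endc X pre = P @ X0 @ Q" "leq C X0 a b"
  shows "sem C X Ls = sem C X Ls'"
proof -
  have l: "wfc C X0 a" "wfc C X0 b" "endc X0 a = endc X0 b" "sem C X0 a = sem C X0 b"
    using assms(6) unfolding leq_def by auto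
  have e: "endc X (pre @ whisk P Q a) = endc X (pre @ whisk P Q b)"
    using l(3) assms(5) by (simp add: endc_append endc_whisk)
  have w1: "wfc C X (pre @ whisk P Q a)" "wfc C X (pre @ whisk P Q b)"
    using assms(1-4) wfc_append by (metis append_assoc)+
  have wp: "wfc C X pre" using w1 wfc_append by blast
  have s1: "sem C X Ls = Cmp C (sem C (endc X (pre @ whisk P Q a)) post) (Cmp C (sem C (P @ X0 @ Q) (whisk P Q a)) (sem C X pre))"
    using assms(1,3,5) w1(1) sem_append by (metis append_assoc)
  have s2: "sem C X Ls' = Cmp C (sem C (endc X (pre @ whisk P Q b)) post) (Cmp C (sem C (P @ X0 @ Q) (whisk P Q b)) (sem C X pre))"
    using assms(2,4,5) w1(2) sem_append by (metis append_assoc)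
  show ?thesis using s1 s2 e sem_whisk[OF l(1)] sem_whisk[OF l(2)] l(4) by simp
qed


lemma leq_sym: "leq C X0 a b \<Longrightarrow> leq C X0 b a" unfolding leq_def by auto

lemma swap_leq:
  assumes h1: "Hom C g1 (obj C s1) (obj C t1)" and h2: "Hom C g2 (obj C s2) (obj C t2)"
  shows "leq C (s1 @ m @ s2) [L [] g1 s1 t1 (m @ s2), L (t1 @ m) g2 s2 t2 []]
                             [L (s1 @ m) g2 s2 t2 [], L [] g1 s1 t1 (m @ t2)]"
proof -
  have a1: "Arr C g1" "Dom C g1 = obj C s1" "Cod C g1 = obj C t1" using h1 by (auto simp: Hom_def)
  have a2: "Arr C g2" "Dom C g2 = obj C s2" "Cod C g2 = obj C t2" using h2 by (auto simp: Hom_def)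
  let ?M = "Id C (obj C m)"
  have e1: "TM C (Id C (TO C (obj C t1) (obj C m))) g2 = TM C (Id C (obj C t1)) (TM C ?M g2)"
    using a2 tm_assoc[of "Id C (obj C t1)" ?M g2] by simp
  have e2: "TM C (Id C (TO C (obj C s1) (obj C m))) g2 = TM C (Id C (obj C s1)) (TM C ?M g2)"
    using a2 tm_assoc[of "Id C (obj C s1)" ?M g2] by simp
  have lhs: "sem C (s1 @ m @ s2) [L [] g1 s1 t1 (m @ s2), L (t1 @ m) g2 s2 t2 []] = TM C g1 (TM C ?M g2)"
  proof -
    have "sem C (s1 @ m @ s2) [L [] g1 s1 t1 (m @ s2), L (t1 @ m) g2 s2 t2 []]
        = Cmp C (Cmp C (Id C (obj C (t1 @ m @ t2))) (TM C (Id C (TO C (obj C t1) (obj C m))) g2))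
                (TM C g1 (Id C (TO C (obj C m) (obj C s2))))"
      using a1 a2 by (simp add: tm_unit)
    also have "\<dots> = Cmp C (TM C (Id C (obj C t1)) (TM C ?M g2)) (TM C g1 (TM C ?M (Id C (obj C s2))))"
      using a1 a2 e1 id_l[of "TM C (Id C (TO C (obj C t1) (obj C m))) g2"] by simp
    also have "\<dots> = TM C (Cmp C (Id C (obj C t1)) g1) (Cmp C (TM C ?M g2) (TM C ?M (Id C (obj C s2))))"
      using a1 a2 by (simp add: interchange)
    also have "\<dots> = TM C g1 (TM C ?M g2)"
      using a1 a2 id_l[of g1] id_r[of "TM C ?M g2"] by simp
    finally show ?thesis .
  qed
  have rhs: "sem C (s1 @ m @ s2) [L (s1 @ m) g2 s2 t2 [], L [] g1 s1 t1 (m @ t2)] = TM C g1 (TM C ?M g2)"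
  proof -
    have "sem C (s1 @ m @ s2) [L (s1 @ m) g2 s2 t2 [], L [] g1 s1 t1 (m @ t2)]
        = Cmp C (Cmp C (Id C (obj C (t1 @ m @ t2))) (TM C g1 (Id C (TO C (obj C m) (obj C t2)))))
                (TM C (Id C (TO C (obj C s1) (obj C m))) g2)"
      using a1 a2 by (simp add: tm_unit)
    also have "\<dots> = Cmp C (TM C g1 (TM C ?M (Id C (obj C t2)))) (TM C (Id C (obj C s1)) (TM C ?M g2))"
      using a1 a2 e2 id_l[of "TM C g1 (Id C (TO C (obj C m) (obj C t2)))"] by simp
    also have "\<dots> = TM C (Cmp C g1 (Id C (obj C s1))) (Cmp C (TM C ?M (Id C (obj C t2))) (TM C ?M g2))"
      using a1 a2 by (simp add: interchange)
    also have "\<dots> = TM C g1 (TM C ?M g2)"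
      using a1 a2 id_r[of g1] id_l[of "TM C ?M g2"] by simp
    finally show ?thesis .
  qed
  show ?thesis unfolding leq_def using lhs rhs h1 h2 by simp
qed

lemma endc_take: "wfc C X Ls \<Longrightarrow> n < length Ls \<Longrightarrow> endc X (take n Ls) = lay_dom (Ls ! n)"
proof (induction Ls arbitrary: X n)
  case Nil then show ?case by simp
next
  case (Cons l Ls) then show ?case by (cases n) auto
qed

lemma okl_nth: "wfc C X Ls \<Longrightarrow> n < length Ls \<Longrightarrow> okl C (Ls ! n)"
proof (induction Ls arbitrary: X n)
  case Nil then show ?case by simp
next
  case (Cons l Ls) then show ?case by (cases n) auto
qed

lemma split3: "take k (drop n Ls) = W \<Longrightarrow> Ls = take n Ls @ W @ drop (n + k) Ls"
  by (metis append_take_drop_id drop_drop add.commute)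

lemma id_l'[simp]: "Arr C f \<Longrightarrow> Cod C f = X \<Longrightarrow> Cmp C (Id C X) f = f" using id_l by blast
lemma id_r'[simp]: "Arr C f \<Longrightarrow> Dom C f = X \<Longrightarrow> Cmp C f (Id C X) = f" using id_r by blast
lemma tm_unit'[simp]: "Arr C f \<Longrightarrow> TM C (Id C (Unit C)) f = f" "Arr C f \<Longrightarrow> TM C f (Id C (Unit C)) = f"
  using tm_unit by auto

lemma cmp_assoc': "Arr C f \<Longrightarrow> Arr C g \<Longrightarrow> Arr C h \<Longrightarrow> Dom C g = Cod C f \<Longrightarrow> Dom C h = Cod C g \<Longrightarrow>
        Cmp C (Cmp C h g) f = Cmp C h (Cmp C g f)" using cmp_assoc by simp

lemma tm2: "Hom C f (obj C s1) (obj C t1) \<Longrightarrow> Hom C g (obj C s2) (obj C t2) \<Longrightarrow>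
   sem C (s1 @ s2) [L [] f s1 t1 s2, L t1 g s2 t2 []] = TM C f g"
  unfolding Hom_def by (simp add: interchange[symmetric])

lemma tm2': "Hom C f (obj C s1) (obj C t1) \<Longrightarrow> Hom C g (obj C s2) (obj C t2) \<Longrightarrow>
   sem C (s1 @ s2) [L s1 g s2 t2 [], L [] f s1 t1 t2] = TM C f g"
proof -
  assume h: "Hom C f (obj C s1) (obj C t1)" "Hom C g (obj C s2) (obj C t2)"
  show ?thesis using swap_leq[OF h, of "[]"] tm2[OF h] unfolding leq_def by simp
qed

lemma br_unit: "Br C (Unit C) Z = Id C Z" "Br C Z (Unit C) = Id C Z"
proof -
  let ?b = "Br C (Unit C) Z"
  have "?b = Cmp C (TM C (Br C (Unit C) Z) (Id C (Unit C))) (TM C (Id C (Unit C)) (Br C (Unit C) Z))"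
    using hex2[of "Unit C" "Unit C" Z] by simp
  then have bb: "?b = Cmp C ?b ?b" by simp
  have "Id C Z = Cmp C (BrInv C (Unit C) Z) ?b" using br_inv(2)[of "Unit C" Z] by simp
  also have "\<dots> = Cmp C (BrInv C (Unit C) Z) (Cmp C ?b ?b)" using bb by simp
  also have "\<dots> = Cmp C (Cmp C (BrInv C (Unit C) Z) ?b) ?b" by (simp add: cmp_assoc)
  also have "\<dots> = ?b" using br_inv(2)[of "Unit C" Z] by simp
  finally show "?b = Id C Z" by simp
next
  let ?b = "Br C Z (Unit C)"
  have "?b = Cmp C (TM C (Id C (Unit C)) (Br C Z (Unit C))) (TM C (Br C Z (Unit C)) (Id C (Unit C)))"
    using hex1[of Z "Unit C" "Unit C"] by simp
  then have bb: "?b = Cmp C ?b ?b" by simp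
  have "Id C Z = Cmp C (BrInv C Z (Unit C)) ?b" using br_inv(2)[of Z "Unit C"] by simp
  also have "\<dots> = Cmp C (BrInv C Z (Unit C)) (Cmp C ?b ?b)" using bb by simp
  also have "\<dots> = Cmp C (Cmp C (BrInv C Z (Unit C)) ?b) ?b" by (simp add: cmp_assoc)
  also have "\<dots> = ?b" using br_inv(2)[of Z "Unit C"] by simp
  finally show "?b = Id C Z" by simp
qed

lemma inv_unique: "Arr C h \<Longrightarrow> Dom C h = TO C Y X \<Longrightarrow> Cmp C h (Br C X Y) = Id C (TO C X Y) \<Longrightarrow> h = BrInv C X Y"
proof -
  assume h: "Arr C h" "Dom C h = TO C Y X" "Cmp C h (Br C X Y) = Id C (TO C X Y)"
  have "h = Cmp C h (Cmp C (Br C X Y) (BrInv C X Y))" using h br_inv(1)[of X Y] by simp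
  also have "\<dots> = Cmp C (Cmp C h (Br C X Y)) (BrInv C X Y)" using h by (simp add: cmp_assoc)
  also have "\<dots> = BrInv C X Y" using h by simp
  finally show ?thesis .
qed

lemma bri_nat: "Arr C f \<Longrightarrow> Arr C g \<Longrightarrow>
   Cmp C (BrInv C (Cod C f) (Cod C g)) (TM C g f) = Cmp C (TM C f g) (BrInv C (Dom C f) (Dom C g))"
proof -
  assume a: "Arr C f" "Arr C g"
  let ?bc = "Br C (Cod C f) (Cod C g)" and ?ic = "BrInv C (Cod C f) (Cod C g)"
  let ?bd = "Br C (Dom C f) (Dom C g)" and ?id = "BrInv C (Dom C f) (Dom C g)"
  have n: "Cmp C ?bc (TM C f g) = Cmp C (TM C g f) ?bd" using br_nat a by blast
  have "Cmp C (TM C f g) ?id = Cmp C (Cmp C ?ic ?bc) (Cmp C (TM C f g) ?id)"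
    using a br_inv(2)[of "Cod C f" "Cod C g"] by simp
  also have "\<dots> = Cmp C ?ic (Cmp C (Cmp C ?bc (TM C f g)) ?id)"
    using a by (simp add: cmp_assoc)
  also have "\<dots> = Cmp C ?ic (Cmp C (Cmp C (TM C g f) ?bd) ?id)" using n by simp
  also have "\<dots> = Cmp C ?ic (Cmp C (TM C g f) (Cmp C ?bd ?id))" using a by (simp add: cmp_assoc)
  also have "\<dots> = Cmp C ?ic (TM C g f)" using a br_inv(1)[of "Dom C f" "Dom C g"] by simp
  finally show ?thesis by simp
qed

lemma bri_hex2: "BrInv C (TO C X Y) Z = Cmp C (TM C (Id C X) (BrInv C Y Z)) (TM C (BrInv C X Z) (Id C Y))"
proof -
  let ?h = "Cmp C (TM C (Id C X) (BrInv C Y Z)) (TM C (BrInv C X Z) (Id C Y))"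
  have "Cmp C ?h (Br C (TO C X Y) Z) = Cmp C ?h (Cmp C (TM C (Br C X Z) (Id C Y)) (TM C (Id C X) (Br C Y Z)))"
    using hex2 by simp
  also have "\<dots> = Cmp C (TM C (Id C X) (BrInv C Y Z)) (Cmp C (Cmp C (TM C (BrInv C X Z) (Id C Y)) (TM C (Br C X Z) (Id C Y))) (TM C (Id C X) (Br C Y Z)))"
    by (simp add: cmp_assoc)
  also have "\<dots> = Cmp C (TM C (Id C X) (BrInv C Y Z)) (TM C (Id C X) (Br C Y Z))"
    by (simp add: interchange[symmetric] br_inv)
  also have "\<dots> = Id C (TO C (TO C X Y) Z)"
    by (simp add: interchange[symmetric] br_inv)
  finally show ?thesis by (intro inv_unique[symmetric]) auto
qed

lemma bri_hex1: "BrInv C X (TO C Y Z) = Cmp C (TM C (BrInv C X Y) (Id C Z)) (TM C (Id C Y) (BrInv C X Z))"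
proof -
  let ?h = "Cmp C (TM C (BrInv C X Y) (Id C Z)) (TM C (Id C Y) (BrInv C X Z))"
  have "Cmp C ?h (Br C X (TO C Y Z)) = Cmp C ?h (Cmp C (TM C (Id C Y) (Br C X Z)) (TM C (Br C X Y) (Id C Z)))"
    using hex1 by simp
  also have "\<dots> = Cmp C (TM C (BrInv C X Y) (Id C Z)) (Cmp C (Cmp C (TM C (Id C Y) (BrInv C X Z)) (TM C (Id C Y) (Br C X Z))) (TM C (Br C X Y) (Id C Z)))"
    by (simp add: cmp_assoc)
  also have "\<dots> = Cmp C (TM C (BrInv C X Y) (Id C Z)) (TM C (Br C X Y) (Id C Z))"
    by (simp add: interchange[symmetric] br_inv)
  also have "\<dots> = Id C (TO C X (TO C Y Z))"
    by (simp add: interchange[symmetric] br_inv)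
  finally show ?thesis by (intro inv_unique[symmetric]) auto
qed

lemma bri_unit: "BrInv C (Unit C) Z = Id C Z" "BrInv C Z (Unit C) = Id C Z"
  using br_inv(2)[of "Unit C" Z] br_inv(2)[of Z "Unit C"] by (simp_all add: br_unit)

end

context bsm begin

lemma sem_brR: "wfc C (xs @ [Z]) (brR C xs Z) \<and> endc (xs @ [Z]) (brR C xs Z) = Z # xs \<and> sem C (xs @ [Z]) (brR C xs Z) = Br C (obj C xs) Z"
proof (induction xs)
  case Nil then show ?case by (simp add: br_unit)
next
  case (Cons x xs)
  have w: "wfc C ([x] @ (xs @ [Z]) @ []) (whisk [x] [] (brR C xs Z))" using Cons wfc_whisk by blast
  have e: "endc ([x] @ (xs @ [Z]) @ []) (whisk [x] [] (brR C xs Z)) = x # Z # xs" using Cons endc_whisk[of "[x]" "xs @ [Z]" "[]" "brR C xs Z"] by simp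
  have s: "sem C ([x] @ (xs @ [Z]) @ []) (whisk [x] [] (brR C xs Z)) = TM C (Id C x) (Br C (obj C xs) Z)"
    using sem_whisk[of "xs @ [Z]" "brR C xs Z" "[x]" "[]"] Cons by simp
  have w2: "wfc C (x # xs @ [Z]) (brR C (x # xs) Z)" using w e by (simp add: wfc_append Hom_def)
  show ?case using w e s w2 sem_append[OF w2[simplified]] hex2[of x "obj C xs" Z]
    by (simp add: endc_append)
qed

lemma sem_brL: "wfc C (Z # xs) (brL C Z xs) \<and> endc (Z # xs) (brL C Z xs) = xs @ [Z] \<and> sem C (Z # xs) (brL C Z xs) = Br C Z (obj C xs)"
proof (induction xs)
  case Nil then show ?case by (simp add: br_unit)
next
  case (Cons x xs)
  have w: "wfc C ([x] @ (Z # xs) @ []) (whisk [x] [] (brL C Z xs))" using Cons wfc_whisk by blast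
  have e: "endc ([x] @ (Z # xs) @ []) (whisk [x] [] (brL C Z xs)) = x # xs @ [Z]" using Cons endc_whisk[of "[x]" "Z # xs" "[]" "brL C Z xs"] by simp
  have s: "sem C ([x] @ (Z # xs) @ []) (whisk [x] [] (brL C Z xs)) = TM C (Id C x) (Br C Z (obj C xs))"
    using sem_whisk[of "Z # xs" "brL C Z xs" "[x]" "[]"] Cons by simp
  have w2: "wfc C (Z # x # xs) (brL C Z (x # xs))" using w e by (simp add: Hom_def)
  show ?case using w e s w2 sem_append[of "Z # x # xs" "[L [] (Br C Z x) [Z, x] [x, Z] xs]" "whisk [x] [] (brL C Z xs)"] hex1[of Z x "obj C xs"]
    by (simp add: endc_append)
qed

lemma sem_ibrR: "wfc C (Z # xs) (ibrR C xs Z) \<and> endc (Z # xs) (ibrR C xs Z) = xs @ [Z] \<and> sem C (Z # xs) (ibrR C xs Z) = BrInv C (obj C xs) Z"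
proof (induction xs)
  case Nil then show ?case by (simp add: bri_unit)
next
  case (Cons x xs)
  have w: "wfc C ([x] @ (Z # xs) @ []) (whisk [x] [] (ibrR C xs Z))" using Cons wfc_whisk by blast
  have e: "endc ([x] @ (Z # xs) @ []) (whisk [x] [] (ibrR C xs Z)) = x # xs @ [Z]" using Cons endc_whisk[of "[x]" "Z # xs" "[]" "ibrR C xs Z"] by simp
  have s: "sem C ([x] @ (Z # xs) @ []) (whisk [x] [] (ibrR C xs Z)) = TM C (Id C x) (BrInv C (obj C xs) Z)"
    using sem_whisk[of "Z # xs" "ibrR C xs Z" "[x]" "[]"] Cons by simp
  have w2: "wfc C (Z # x # xs) (ibrR C (x # xs) Z)" using w e by (simp add: Hom_def)
  show ?case using w e s w2 sem_append[of "Z # x # xs" "[L [] (BrInv C x Z) [Z, x] [x, Z] xs]" "whisk [x] [] (ibrR C xs Z)"] bri_hex2[of x "obj C xs" Z]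
    by (simp add: endc_append)
qed

lemma sem_ibrL: "wfc C (xs @ [Z]) (ibrL C Z xs) \<and> endc (xs @ [Z]) (ibrL C Z xs) = Z # xs \<and> sem C (xs @ [Z]) (ibrL C Z xs) = BrInv C Z (obj C xs)"
proof (induction xs)
  case Nil then show ?case by (simp add: bri_unit)
next
  case (Cons x xs)
  have w: "wfc C ([x] @ (xs @ [Z]) @ []) (whisk [x] [] (ibrL C Z xs))" using Cons wfc_whisk by blast
  have e: "endc ([x] @ (xs @ [Z]) @ []) (whisk [x] [] (ibrL C Z xs)) = x # Z # xs" using Cons endc_whisk[of "[x]" "xs @ [Z]" "[]" "ibrL C Z xs"] by simp
  have s: "sem C ([x] @ (xs @ [Z]) @ []) (whisk [x] [] (ibrL C Z xs)) = TM C (Id C x) (BrInv C Z (obj C xs))"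
    using sem_whisk[of "xs @ [Z]" "ibrL C Z xs" "[x]" "[]"] Cons by simp
  have w2: "wfc C (x # xs @ [Z]) (ibrL C Z (x # xs))" using w e by (simp add: wfc_append Hom_def)
  show ?case using w e s w2 sem_append[OF w2[simplified]] bri_hex1[of Z x "obj C xs"]
    by (simp add: endc_append)
qed

lemma natR: assumes h: "Hom C g (obj C s) (obj C t)"
  shows "leq C (s @ [Z]) (L [] g s t [Z] # brR C t Z) (brR C s Z @ [L [Z] g s t []])"
proof -
  have a: "Arr C g" "Dom C g = obj C s" "Cod C g = obj C t" using h by (auto simp: Hom_def)
  have w1: "wfc C (s @ [Z]) (L [] g s t [Z] # brR C t Z)" using sem_brR[of t Z] h by simp
  have w2: "wfc C (s @ [Z]) (brR C s Z @ [L [Z] g s t []])" using sem_brR[of s Z] h by (simp add: wfc_append)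
  have "sem C (s @ [Z]) (brR C s Z @ [L [Z] g s t []]) = Cmp C (TM C (Id C Z) g) (Br C (obj C s) Z)"
    using sem_append[OF w2] sem_brR[of s Z] a by simp
  also have "\<dots> = Cmp C (Br C (obj C t) Z) (TM C g (Id C Z))"
    using br_nat[of g "Id C Z"] a by simp
  finally show ?thesis unfolding leq_def using w1 w2 sem_brR[of t Z] sem_brR[of s Z] a
    by (simp add: endc_append)
qed

lemma natL: assumes h: "Hom C g (obj C s) (obj C t)"
  shows "leq C (Z # s) (L [Z] g s t [] # brL C Z t) (brL C Z s @ [L [] g s t [Z]])"
proof -
  have a: "Arr C g" "Dom C g = obj C s" "Cod C g = obj C t" using h by (auto simp: Hom_def)
  have w1: "wfc C (Z # s) (L [Z] g s t [] # brL C Z t)" using sem_brL[of Z t] h by simp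
  have w2: "wfc C (Z # s) (brL C Z s @ [L [] g s t [Z]])" using sem_brL[of Z s] h by (simp add: wfc_append)
  have "sem C (Z # s) (brL C Z s @ [L [] g s t [Z]]) = Cmp C (TM C g (Id C Z)) (Br C Z (obj C s))"
    using sem_append[OF w2] sem_brL[of Z s] a by simp
  also have "\<dots> = Cmp C (Br C Z (obj C t)) (TM C (Id C Z) g)"
    using br_nat[of "Id C Z" g] a by simp
  finally show ?thesis unfolding leq_def using w1 w2 sem_brL[of Z t] sem_brL[of Z s] a
    by (simp add: endc_append)
qed

lemma inatR: assumes h: "Hom C g (obj C s) (obj C t)"
  shows "leq C (Z # s) (L [Z] g s t [] # ibrR C t Z) (ibrR C s Z @ [L [] g s t [Z]])"
proof -
  have a: "Arr C g" "Dom C g = obj C s" "Cod C g = obj C t" using h by (auto simp: Hom_def)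
  have w1: "wfc C (Z # s) (L [Z] g s t [] # ibrR C t Z)" using sem_ibrR[of Z t] h by simp
  have w2: "wfc C (Z # s) (ibrR C s Z @ [L [] g s t [Z]])" using sem_ibrR[of Z s] h by (simp add: wfc_append)
  have "sem C (Z # s) (ibrR C s Z @ [L [] g s t [Z]]) = Cmp C (TM C g (Id C Z)) (BrInv C (obj C s) Z)"
    using sem_append[OF w2] sem_ibrR[of Z s] a by simp
  also have "\<dots> = Cmp C (BrInv C (obj C t) Z) (TM C (Id C Z) g)"
    using bri_nat[of g "Id C Z"] a by simp
  finally show ?thesis unfolding leq_def using w1 w2 sem_ibrR[of Z t] sem_ibrR[of Z s] a
    by (simp add: endc_append)
qed

lemma inatL: assumes h: "Hom C g (obj C s) (obj C t)"
  shows "leq C (s @ [Z]) (L [] g s t [Z] # ibrL C Z t) (ibrL C Z s @ [L [Z] g s t []])"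
proof -
  have a: "Arr C g" "Dom C g = obj C s" "Cod C g = obj C t" using h by (auto simp: Hom_def)
  have w1: "wfc C (s @ [Z]) (L [] g s t [Z] # ibrL C Z t)" using sem_ibrL[of t Z] h by simp
  have w2: "wfc C (s @ [Z]) (ibrL C Z s @ [L [Z] g s t []])" using sem_ibrL[of s Z] h by (simp add: wfc_append)
  have "sem C (s @ [Z]) (ibrL C Z s @ [L [Z] g s t []]) = Cmp C (TM C (Id C Z) g) (BrInv C Z (obj C s))"
    using sem_append[OF w2] sem_ibrL[of s Z] a by simp
  also have "\<dots> = Cmp C (BrInv C Z (obj C t)) (TM C g (Id C Z))"
    using bri_nat[of "Id C Z" g] a by simp
  finally show ?thesis unfolding leq_def using w1 w2 sem_ibrL[of t Z] sem_ibrL[of s Z] a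
    by (simp add: endc_append)
qed


lemma ntr_leq: "Hom C g (obj C s) (obj C t) \<Longrightarrow> ntr C k b g s t Z = (X0, a, c) \<Longrightarrow> leq C X0 a c"
  unfolding ntr_def
  using natR[of g s t Z] natL[of g s t Z] inatR[of g s t Z] inatL[of g s t Z]
  by (auto split: if_splits intro: leq_sym)

lemma F_sound:
  assumes "wfc C X Ls" "posF X n (X0, a, b) Ls" "leq C X0 a b" "wfc C X (appF n (X0, a, b) Ls)"
  shows "sem C X Ls = sem C X (appF n (X0, a, b) Ls)"
proof -
  let ?P = "autoP (Ls ! n) (hd a)" and ?Q = "autoQ (Ls ! n) (hd a)"
  have o: "take (length a) (drop n Ls) = whisk ?P ?Q a" "endc X (take n Ls) = ?P @ X0 @ ?Q"
    using assms(2) by auto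
  show ?thesis
    by (simp del: autoP.simps autoQ.simps, intro ctx_rw[OF assms(1) _ split3[OF o(1)] refl o(2) assms(3)])
      (use assms(4) in simp)
qed

lemma step_sound:
  assumes "wfc C X Ls" "ok C X st Ls" "wfc C X (app C st Ls)"
  shows "sem C X Ls = sem C X (app C st Ls)"
proof (cases st)
  case (F n tr)
  obtain X0 a b where tr: "tr = (X0, a, b)" by (cases tr) auto
  have lq: "leq C X0 a b" using assms(2) F tr leq_sym by auto
  show ?thesis using F_sound[OF assms(1) _ lq] assms F tr by simp
next
  case (N n k b g s t Z)
  obtain X0 a c where tr: "ntr C k b g s t Z = (X0, a, c)" by (cases "ntr C k b g s t Z") auto
  have lq: "leq C X0 a c" using assms(2) N tr ntr_leq by auto
  show ?thesis using F_sound[OF assms(1) _ lq] assms N tr by simp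
next
  case (G n P Q tr)
  obtain X0 a b where tr: "tr = (X0, a, b)" by (cases tr) auto
  have o: "take (length a) (drop n Ls) = whisk P Q a" "endc X (take n Ls) = P @ X0 @ Q"
     "leq C X0 a b \<or> leq C X0 b a" using assms(2) G tr by auto
  have lq: "leq C X0 a b" using o(3) leq_sym by blast
  show ?thesis using G tr
    by (simp, intro ctx_rw[OF assms(1) _ split3[OF o(1)] refl o(2) lq])
      (use assms(3) G tr in simp)
next
  case (SW n)
  have n: "Suc n < length Ls" and ind: "indepR (Ls ! n) (Ls ! Suc n) \<or> indepL (Ls ! n) (Ls ! Suc n)"
    using assms(2) SW by auto
  obtain p1 g1 s1 t1 q1 where l1: "Ls ! n = L p1 g1 s1 t1 q1" by (cases "Ls ! n") auto
  obtain p2 g2 s2 t2 q2 where l2: "Ls ! Suc n = L p2 g2 s2 t2 q2" by (cases "Ls ! Suc n") auto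
  have h1: "Hom C g1 (obj C s1) (obj C t1)" using okl_nth[OF assms(1), of n] n l1 by simp
  have h2: "Hom C g2 (obj C s2) (obj C t2)" using okl_nth[OF assms(1), of "Suc n"] n l2 by simp
  have dd: "drop n Ls = Ls ! n # Ls ! Suc n # drop (Suc (Suc n)) Ls" using n
    by (metis Cons_nth_drop_Suc Suc_lessD)
  have tk: "take 2 (drop n Ls) = [Ls ! n, Ls ! Suc n]" unfolding dd by (simp add: numeral_2_eq_2)
  have ed: "endc X (take n Ls) = p1 @ s1 @ q1" using endc_take[OF assms(1), of n] n l1 by simp
  show ?thesis
  proof (cases "indepR (Ls ! n) (Ls ! Suc n)")
    case True
    define m where "m = drop (length p1 + length t1) p2"
    have c: "p2 = p1 @ t1 @ m" "q1 = m @ s2 @ q2" using True l1 l2 by (auto simp: m_def Let_def)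
    have W: "[Ls ! n, Ls ! Suc n] = whisk p1 q2 [L [] g1 s1 t1 (m @ s2), L (t1 @ m) g2 s2 t2 []]"
      using l1 l2 c by (simp add: whisk_def)
    have R: "app C st Ls = take n Ls @ whisk p1 q2 [L (s1 @ m) g2 s2 t2 [], L [] g1 s1 t1 (m @ t2)] @ drop (n + 2) Ls"
    proof -
      have "app C st Ls = take n Ls @ swR (Ls ! n) (Ls ! Suc n) @ drop (Suc (Suc n)) Ls" using SW True by simp
      also have "swR (Ls ! n) (Ls ! Suc n) = whisk p1 q2 [L (s1 @ m) g2 s2 t2 [], L [] g1 s1 t1 (m @ t2)]"
        by (simp add: l1 l2 Let_def m_def[symmetric] whisk_def)
      finally show ?thesis by (simp add: numeral_2_eq_2)
    qed
    show ?thesis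
      by (rule ctx_rw[OF assms(1) _ split3[OF tk[unfolded W]] R, of "s1 @ m @ s2"])
        (use assms(3) ed c swap_leq[OF h1 h2, of m] in simp_all)
  next
    case False
    then have iL: "indepL (Ls ! n) (Ls ! Suc n)" using ind by simp
    define m where "m = drop (length p2 + length s2) p1"
    have c: "p1 = p2 @ s2 @ m" "q2 = m @ t1 @ q1" using iL l1 l2 by (auto simp: m_def Let_def)
    have W: "[Ls ! n, Ls ! Suc n] = whisk p2 q1 [L (s2 @ m) g1 s1 t1 [], L [] g2 s2 t2 (m @ t1)]"
      using l1 l2 c by (simp add: whisk_def)
    have R: "app C st Ls = take n Ls @ whisk p2 q1 [L [] g2 s2 t2 (m @ s1), L (t2 @ m) g1 s1 t1 []] @ drop (n + 2) Ls"
    proof -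
      have "app C st Ls = take n Ls @ swL (Ls ! n) (Ls ! Suc n) @ drop (Suc (Suc n)) Ls" using SW False by simp
      also have "swL (Ls ! n) (Ls ! Suc n) = whisk p2 q1 [L [] g2 s2 t2 (m @ s1), L (t2 @ m) g1 s1 t1 []]"
        by (simp add: l1 l2 Let_def m_def[symmetric] whisk_def)
      finally show ?thesis by (simp add: numeral_2_eq_2)
    qed
    show ?thesis
      by (rule ctx_rw[OF assms(1) _ split3[OF tk[unfolded W]] R, of "s2 @ m @ s1"])
        (use assms(3) ed c leq_sym[OF swap_leq[OF h2 h1, of m]] in simp_all)
  qed
qed

lemma run_sound: "wfc C X Ls \<Longrightarrow> valid C X sts Ls \<Longrightarrow> sem C X Ls = sem C X (run C sts Ls)"
proof (induction sts arbitrary: Ls)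
  case Nil then show ?case by simp
next
  case (Cons st sts)
  then show ?case using step_sound by auto
qed

lemma run_wfc: "wfc C X Ls \<Longrightarrow> valid C X sts Ls \<Longrightarrow> wfc C X (run C sts Ls)"
proof (induction sts arbitrary: Ls)
  case Nil then show ?case by simp
next
  case (Cons st sts)
  then show ?case by auto
qed

lemma run_leq: "wfc C X Ls \<Longrightarrow> valid C X sts Ls \<Longrightarrow> run C sts Ls = Ls' \<Longrightarrow> endc X Ls = endc X Ls' \<Longrightarrow> leq C X Ls Ls'"
  using run_sound run_wfc unfolding leq_def by blast

end



locale bg = bsm C for C :: "('o,'m) bmcat" +
  fixes A Y :: 'o and mu eta De ep S T r d :: 'm
  assumes grp: "braided_group C A mu eta De ep S"
    and hT: "Hom C T A A" and ST: "Cmp C S T = Id C A" and TS: "Cmp C T S = Id C A"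
    and cm: "right_crossed_module C A mu eta De ep Y r d"
begin

abbreviation "lmu p q \<equiv> L p mu [A, A] [A] q"
abbreviation "lun p q \<equiv> L p eta [] [A] q"
abbreviation "lde p q \<equiv> L p De [A] [A, A] q"
abbreviation "lep p q \<equiv> L p ep [A] [] q"
abbreviation "lS p q \<equiv> L p S [A] [A] q"
abbreviation "lT p q \<equiv> L p T [A] [A] q"
abbreviation "lr p q \<equiv> L p r [Y, A] [Y] q"
abbreviation "ld p q \<equiv> L p d [Y] [Y, A] q"
abbreviation "bAA p q \<equiv> L p (Br C A A) [A, A] [A, A] q"
abbreviation "bAY p q \<equiv> L p (Br C A Y) [A, Y] [Y, A] q"
abbreviation "bYA p q \<equiv> L p (Br C Y A) [Y, A] [A, Y] q"
abbreviation "iAA p q \<equiv> L p (BrInv C A A) [A, A] [A, A] q"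
abbreviation "iAY p q \<equiv> L p (BrInv C A Y) [Y, A] [A, Y] q"
abbreviation "iYA p q \<equiv> L p (BrInv C Y A) [A, Y] [Y, A] q"

lemma bialg: "bialgebra C A mu eta De ep" using grp by (simp add: braided_group_def)
lemma hmu: "Hom C mu (TO C A A) A" using bialg by (simp add: bialgebra_def)
lemma heta: "Hom C eta (Unit C) A" using bialg by (simp add: bialgebra_def)
lemma hDe: "Hom C De A (TO C A A)" using bialg by (simp add: bialgebra_def)
lemma hep: "Hom C ep A (Unit C)" using bialg by (simp add: bialgebra_def)
lemma hS: "Hom C S A A" using grp by (simp add: braided_group_def)
lemma hr: "Hom C r (TO C Y A) Y" using cm by (simp add: right_crossed_module_def right_module_def)
lemma hd: "Hom C d Y (TO C Y A)" using cm by (simp add: right_crossed_module_def right_comodule_def)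

lemma arrs[simp]:
  "Arr C mu" "Dom C mu = TO C A A" "Cod C mu = A"
  "Arr C eta" "Dom C eta = Unit C" "Cod C eta = A"
  "Arr C De" "Dom C De = A" "Cod C De = TO C A A"
  "Arr C ep" "Dom C ep = A" "Cod C ep = Unit C"
  "Arr C S" "Dom C S = A" "Cod C S = A"
  "Arr C T" "Dom C T = A" "Cod C T = A"
  "Arr C r" "Dom C r = TO C Y A" "Cod C r = Y"
  "Arr C d" "Dom C d = Y" "Cod C d = TO C Y A"
  using hmu heta hDe hep hS hT hr hd by (auto simp: Hom_def)

lemma homs[simp]:
  "Hom C mu (TO C A A) A" "Hom C eta (Unit C) A" "Hom C De A (TO C A A)" "Hom C ep A (Unit C)"
  "Hom C S A A" "Hom C T A A" "Hom C r (TO C Y A) Y" "Hom C d Y (TO C Y A)"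
  "Hom C (Br C X Z) (TO C X Z) (TO C Z X)" "Hom C (BrInv C X Z) (TO C Z X) (TO C X Z)"
  by (auto simp: Hom_def)

lemma ax_assoc: "leq C [A,A,A] [lmu [] [A], lmu [] []] [lmu [A] [], lmu [] []]"
  using bialg unfolding leq_def bialgebra_def by simp
lemma ax_unitL: "leq C [A] [lun [] [A], lmu [] []] []"
  using bialg unfolding leq_def bialgebra_def by simp
lemma ax_unitR: "leq C [A] [lun [A] [], lmu [] []] []"
  using bialg unfolding leq_def bialgebra_def by simp
lemma ax_coassoc: "leq C [A] [lde [] [], lde [] [A]] [lde [] [], lde [A] []]"
  using bialg unfolding leq_def bialgebra_def by simp
lemma ax_counitL: "leq C [A] [lde [] [], lep [] [A]] []"
  using bialg unfolding leq_def bialgebra_def by simp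
lemma ax_counitR: "leq C [A] [lde [] [], lep [A] []] []"
  using bialg unfolding leq_def bialgebra_def by simp
lemma ax_bialg: "leq C [A,A] [lmu [] [], lde [] []] [lde [] [A], lde [A,A] [], bAA [A] [A], lmu [] [A,A], lmu [A] []]"
  using bialg unfolding leq_def bialgebra_def by (simp add: interchange[symmetric] cmp_assoc')

lemma ax_Deta: "leq C [] [lun [] [], lde [] []] [lun [] [], lun [A] []]"
  using bialg tm2[of eta "[]" "[A]" eta "[]" "[A]"] unfolding leq_def bialgebra_def by (simp add: interchange[symmetric] cmp_assoc')
lemma ax_epmu: "leq C [A,A] [lmu [] [], lep [] []] [lep [] [A], lep [] []]"
  using bialg tm2[of ep "[A]" "[]" ep "[A]" "[]"] unfolding leq_def bialgebra_def by (simp add: interchange[symmetric] cmp_assoc')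
lemma ax_epeta: "leq C [] [lun [] [], lep [] []] []"
  using bialg unfolding leq_def bialgebra_def by (simp add: interchange[symmetric] cmp_assoc')
lemma ax_antiL: "leq C [A] [lde [] [], lS [] [A], lmu [] []] [lep [] [], lun [] []]"
  using grp unfolding leq_def braided_group_def by (simp add: cmp_assoc')
lemma ax_antiR: "leq C [A] [lde [] [], lS [A] [], lmu [] []] [lep [] [], lun [] []]"
  using grp unfolding leq_def braided_group_def by (simp add: cmp_assoc')
lemma ax_ST: "leq C [A] [lT [] [], lS [] []] []"
  using ST unfolding leq_def by simp
lemma ax_TS: "leq C [A] [lS [] [], lT [] []] []"
  using TS unfolding leq_def by simp
lemma ax_mod: "leq C [Y,A,A] [lr [] [A], lr [] []] [lmu [Y] [], lr [] []]"
  using cm unfolding leq_def right_crossed_module_def right_module_def by (simp add: cmp_assoc')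
lemma ax_modu: "leq C [Y] [lun [Y] [], lr [] []] []"
  using cm unfolding leq_def right_crossed_module_def right_module_def by (simp add: cmp_assoc')
lemma ax_comod: "leq C [Y] [ld [] [], ld [] [A]] [ld [] [], lde [Y] []]"
  using cm unfolding leq_def right_crossed_module_def right_comodule_def by (simp add: cmp_assoc')
lemma ax_comodu: "leq C [Y] [ld [] [], lep [Y] []] []"
  using cm unfolding leq_def right_crossed_module_def right_comodule_def by (simp add: cmp_assoc')
lemma ax_cm: "leq C [Y,A] [lde [Y] [], bYA [] [A], lr [A] [], ld [A] [], bAY [] [A], lmu [Y] []]
                          [ld [] [A], lde [Y,A] [], bAA [Y] [A], lr [] [A,A], lmu [Y] []]"
  using cm unfolding leq_def right_crossed_module_def by (simp add: interchange[symmetric] cmp_assoc')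
lemma ax_bi1: "leq C [Z,X] [L [] (BrInv C X Z) [Z,X] [X,Z] [], L [] (Br C X Z) [X,Z] [Z,X] []] []"
  unfolding leq_def by (simp add: br_inv)
lemma ax_bi2: "leq C [X,Z] [L [] (Br C X Z) [X,Z] [Z,X] [], L [] (BrInv C X Z) [Z,X] [X,Z] []] []"
  unfolding leq_def by (simp add: br_inv)

lemmas axs = ax_assoc ax_unitL ax_unitR ax_coassoc ax_counitL ax_counitR ax_bialg ax_Deta ax_epmu ax_epeta
  ax_antiL ax_antiR ax_ST ax_TS ax_mod ax_modu ax_comod ax_comodu ax_cm ax_bi1 ax_bi2


abbreviation "tAssoc \<equiv> ([A,A,A], [lmu [] [A], lmu [] []], [lmu [A] [], lmu [] []])"
abbreviation "tUnitL \<equiv> ([A], [lun [] [A], lmu [] []], [])"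
abbreviation "tUnitR \<equiv> ([A], [lun [A] [], lmu [] []], [])"
abbreviation "tCoassoc \<equiv> ([A], [lde [] [], lde [] [A]], [lde [] [], lde [A] []])"
abbreviation "tCounitL \<equiv> ([A], [lde [] [], lep [] [A]], [])"
abbreviation "tCounitR \<equiv> ([A], [lde [] [], lep [A] []], [])"
abbreviation "tBialg \<equiv> ([A,A], [lmu [] [], lde [] []], [lde [] [A], lde [A,A] [], bAA [A] [A], lmu [] [A,A], lmu [A] []])"
abbreviation "tDeta \<equiv> ([], [lun [] [], lde [] []], [lun [] [], lun [A] []])"
abbreviation "tEpmu \<equiv> ([A,A], [lmu [] [], lep [] []], [lep [] [A], lep [] []])"
abbreviation "tEpeta \<equiv> ([], [lun [] [], lep [] []], [])"
abbreviation "tAntiL \<equiv> ([A], [lde [] [], lS [] [A], lmu [] []], [lep [] [], lun [] []])"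
abbreviation "tAntiR \<equiv> ([A], [lde [] [], lS [A] [], lmu [] []], [lep [] [], lun [] []])"
abbreviation "tST \<equiv> ([A], [lT [] [], lS [] []], [])"
abbreviation "tTS \<equiv> ([A], [lS [] [], lT [] []], [])"
abbreviation "tMod \<equiv> ([Y,A,A], [lr [] [A], lr [] []], [lmu [Y] [], lr [] []])"
abbreviation "tModu \<equiv> ([Y], [lun [Y] [], lr [] []], [])"
abbreviation "tComod \<equiv> ([Y], [ld [] [], ld [] [A]], [ld [] [], lde [Y] []])"
abbreviation "tComodu \<equiv> ([Y], [ld [] [], lep [Y] []], [])"
abbreviation "tCM \<equiv> ([Y,A], [lde [Y] [], bYA [] [A], lr [A] [], ld [A] [], bAY [] [A], lmu [Y] []],
                          [ld [] [A], lde [Y,A] [], bAA [Y] [A], lr [] [A,A], lmu [Y] []])"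
abbreviation "tBI X Z \<equiv> ([Z,X], [L [] (BrInv C X Z) [Z,X] [X,Z] [], L [] (Br C X Z) [X,Z] [Z,X] []], [])"
abbreviation "tIB X Z \<equiv> ([X,Z], [L [] (Br C X Z) [X,Z] [Z,X] [], L [] (BrInv C X Z) [Z,X] [X,Z] []], [])"

end


context bg begin

abbreviation "td2c \<equiv> ([A,A], [lde [] [A], lde [A,A] [], bAA [A] [A], lep [A,A] [A], lep [A,A] []], [])"
lemma d2c: "leq C [A,A] [lde [] [A], lde [A,A] [], bAA [A] [A], lep [A,A] [A], lep [A,A] []] []"
  by (rule run_leq[where sts="[N 2 0 False ep [A] [] A, SW 1, F 0 tCounitR, F 0 tCounitR]"])
    (simp_all add: whisk_def ntr_def Let_def axs)
abbreviation "td2cL \<equiv> ([A,A], [lde [] [A], lde [A,A] [], bAA [A] [A], lep [] [A,A,A], lep [] [A,A]], [])"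
lemma d2cL: "leq C [A,A] [lde [] [A], lde [A,A] [], bAA [A] [A], lep [] [A,A,A], lep [] [A,A]] []"
  by (rule run_leq[where sts="[SW 2, N 3 1 False ep [A] [] A, SW 1, F 0 tCounitL, F 0 tCounitL]"])
    (simp_all add: whisk_def ntr_def Let_def axs)

lemma leq_trans: "leq C X a b \<Longrightarrow> leq C X b c \<Longrightarrow> leq C X a c" unfolding leq_def by auto
lemma leq_join: "leq C X a k \<Longrightarrow> leq C X b k \<Longrightarrow> leq C X a b" using leq_trans leq_sym by metis

abbreviation "td2co \<equiv> ([A,A], [lde [] [A], lde [A,A] [], bAA [A] [A], lde [A,A] [A], lde [A,A,A,A] [], bAA [A,A,A] [A]], [lde [] [A], lde [A,A] [], bAA [A] [A], lde [] [A,A,A], lde [A,A] [A,A], bAA [A] [A,A,A]])"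
lemma d2co: "leq C [A,A] [lde [] [A], lde [A,A] [], bAA [A] [A], lde [A,A] [A], lde [A,A,A,A] [], bAA [A,A,A] [A]]
                         [lde [] [A], lde [A,A] [], bAA [A] [A], lde [] [A,A,A], lde [A,A] [A,A], bAA [A] [A,A,A]]"
proof (rule leq_join)
  show "leq C [A,A] [lde [] [A], lde [A,A] [], bAA [A] [A], lde [A,A] [A], lde [A,A,A,A] [], bAA [A,A,A] [A]]
     [lde [] [A], lde [] [A, A], lde [A, A, A] [], lde [A, A, A] [A], bAA [A, A] [A, A], bAA [A, A, A] [A], bAA [A] [A, A, A]]"
  by (rule run_leq[where sts="[N 2 0 False De [A] [A,A] A, SW 1, F 0 (rv tCoassoc), SW 4, SW 3, F 2 (rv tCoassoc), SW 5]"])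
    (simp_all add: whisk_def ntr_def Let_def axs)
  show "leq C [A,A] [lde [] [A], lde [A,A] [], bAA [A] [A], lde [] [A,A,A], lde [A,A] [A,A], bAA [A] [A,A,A]]
     [lde [] [A], lde [] [A, A], lde [A, A, A] [], lde [A, A, A] [A], bAA [A, A] [A, A], bAA [A, A, A] [A], bAA [A] [A, A, A]]"
  by (rule run_leq[where sts="[SW 2, SW 1, N 3 1 False De [A] [A,A] A]"])
    (simp_all add: whisk_def ntr_def Let_def axs)
qed

abbreviation "tmg \<equiv> ([A,A], [lde [] [A], lde [A,A] [], bAA [A] [A], lmu [] [A,A], lS [A] [A], lS [A,A] [], bAA [A] [], lmu [A] [], lmu [] []], [lep [] [A], lep [] [], lun [] []])"
lemma mg: "leq C [A,A] [lde [] [A], lde [A,A] [], bAA [A] [A], lmu [] [A,A], lS [A] [A], lS [A,A] [], bAA [A] [], lmu [A] [], lmu [] []]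
      [lep [] [A], lep [] [], lun [] []]"
  by (rule run_leq[where sts="[SW 4, N 5 0 True S [A] [A] A, N 4 1 True S [A] [A] A, SW 3, N 1 1 True De [A] [A,A] A, F 6 (rv tAssoc), SW 3, SW 4, F 5 tAssoc, SW 4, F 2 tAntiR, SW 4, F 3 tUnitR, N 1 1 False ep [A] [] A, SW 1, SW 2, F 0 tAntiR, SW 1]"])
    (simp_all add: whisk_def ntr_def Let_def axs d2c d2cL d2co)

abbreviation "tF1 \<equiv> ([A,A], [lmu [] [], lS [] []],
      [lS [] [A], lS [A] [], bAA [] [], lmu [] []])"
lemma F1: "leq C [A,A] [lmu [] [], lS [] []]
      [lS [] [A], lS [A] [], bAA [] [], lmu [] []]"
  by (rule run_leq[where sts="[G 0 [] [] (rv td2c), G 7 [] [] (rv tUnitR), SW 6, SW 5, F 3 (rv tmg), F 0 td2co, SW 11, SW 12, F 13 (rv tAssoc), SW 6, SW 7, SW 8, SW 9, SW 9, SW 10, SW 11, SW 12, SW 8, SW 9, SW 10, SW 11, SW 7, SW 8, SW 9, SW 10, SW 6, SW 7, SW 8, SW 9, SW 6, F 3 (rv tBialg), F 4 tAntiL, F 3 tEpmu, SW 5, SW 6, SW 7, SW 8, F 9 tUnitL, F 0 td2cL]"])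
    (simp_all add: whisk_def ntr_def Let_def axs d2c d2cL d2co mg)

abbreviation "td2u \<equiv> ([A,A], [lun [A,A] [], lun [A,A,A] [], bAA [A] [A], lmu [] [A,A], lmu [A] []],
      [])"
lemma d2u: "leq C [A,A] [lun [A,A] [], lun [A,A,A] [], bAA [A] [A], lmu [] [A,A], lmu [A] []]
      []"
  by (rule run_leq[where sts="[SW 0, N 1 1 True eta [] [A] A, F 1 tUnitR, F 0 tUnitR]"])
    (simp_all add: whisk_def ntr_def Let_def axs d2c d2cL d2co mg F1)

abbreviation "td2uL \<equiv> ([A,A], [lun [] [A,A], lun [A] [A,A], bAA [A] [A], lmu [] [A,A], lmu [A] []],
      [])"
lemma d2uL: "leq C [A,A] [lun [] [A,A], lun [A] [A,A], bAA [A] [A], lmu [] [A,A], lmu [A] []]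
      []"
  by (rule run_leq[where sts="[N 1 0 True eta [] [A] A, SW 0, F 1 tUnitL, F 0 tUnitL]"])
    (simp_all add: whisk_def ntr_def Let_def axs d2c d2cL d2co mg F1 d2u)

abbreviation "td2a \<equiv> ([A,A,A,A,A,A], [bAA [A,A,A] [A], lmu [A,A] [A,A], lmu [A,A,A] [], bAA [A] [A], lmu [] [A,A], lmu [A] []],
      [bAA [A] [A,A,A], lmu [] [A,A,A,A], lmu [A] [A,A], bAA [A] [A], lmu [] [A,A], lmu [A] []])"
lemma d2a: "leq C [A,A,A,A,A,A] [bAA [A,A,A] [A], lmu [A,A] [A,A], lmu [A,A,A] [], bAA [A] [A], lmu [] [A,A], lmu [A] []]
      [bAA [A] [A,A,A], lmu [] [A,A,A,A], lmu [A] [A,A], bAA [A] [A], lmu [] [A,A], lmu [A] []]"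
proof (rule leq_join)
  show "leq C [A,A,A,A,A,A] [bAA [A,A,A] [A], lmu [A,A] [A,A], lmu [A,A,A] [], bAA [A] [A], lmu [] [A,A], lmu [A] []] [bAA [A] [A, A, A], bAA [A, A, A] [A], bAA [A, A] [A, A], lmu [] [A, A, A, A], lmu [] [A, A, A], lmu [A] [A], lmu [A] []]"
  by (rule run_leq[where sts="[SW 2, N 1 1 True mu [A,A] [A] A, SW 4, F 3 (rv tAssoc), F 5 (rv tAssoc), SW 0]"])
    (simp_all add: whisk_def ntr_def Let_def axs d2c d2cL d2co mg F1 d2u d2uL)
  show "leq C [A,A,A,A,A,A] [bAA [A] [A,A,A], lmu [] [A,A,A,A], lmu [A] [A,A], bAA [A] [A], lmu [] [A,A], lmu [A] []] [bAA [A] [A, A, A], bAA [A, A, A] [A], bAA [A, A] [A, A], lmu [] [A, A, A, A], lmu [] [A, A, A], lmu [A] [A], lmu [A] []]"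
  by (rule run_leq[where sts="[N 2 0 True mu [A,A] [A] A, SW 1, SW 2, SW 4]"])
    (simp_all add: whisk_def ntr_def Let_def axs d2c d2cL d2co mg F1 d2u d2uL)
qed

abbreviation "tgm \<equiv> ([A], [lde [] [], lde [] [A], lde [A,A] [], bAA [A,A] [], lS [A,A] [A], lS [A,A,A] [], bAA [A] [A], lmu [] [A,A], lmu [A] []],
      [lep [] [], lun [] [], lun [A] []])"
lemma gm: "leq C [A] [lde [] [], lde [] [A], lde [A,A] [], bAA [A,A] [], lS [A,A] [A], lS [A,A,A] [], bAA [A] [A], lmu [] [A,A], lmu [A] []]
      [lep [] [], lun [] [], lun [A] []]"
  by (rule run_leq[where sts="[SW 4, N 5 1 True S [A] [A] A, SW 4, SW 1, F 0 (rv tCoassoc), F 1 tCoassoc, N 2 0 True De [A] [A,A] A, SW 4, SW 3, SW 6, F 4 tAntiR, N 2 1 False S [A] [A] A, N 3 0 False ep [A] [] A, SW 2, F 1 tCounitR, SW 2, F 0 tAntiR]"])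
    (simp_all add: whisk_def ntr_def Let_def axs d2c d2cL d2co mg F1 d2u d2uL d2a)

abbreviation "tF2 \<equiv> ([A], [lS [] [], lde [] []],
      [lde [] [], bAA [] [], lS [] [A], lS [A] []])"
lemma F2: "leq C [A] [lS [] [], lde [] []]
      [lde [] [], bAA [] [], lS [] [A], lS [A] []]"
  by (rule run_leq[where sts="[G 2 [] [] (rv td2u), G 0 [] [] (rv tCounitR), SW 1, SW 2, F 3 (rv tgm), F 9 td2a, SW 8, SW 9, SW 10, SW 7, SW 8, SW 9, SW 6, SW 7, SW 8, SW 5, SW 6, SW 7, SW 2, SW 1, F 0 (rv tCoassoc), F 3 (rv tBialg), F 1 tAntiL, F 2 tDeta, F 0 tCounitL, SW 1, SW 2, SW 3, SW 4, SW 0, SW 1, SW 2, SW 3, F 4 td2uL]"])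
    (simp_all add: whisk_def ntr_def Let_def axs d2c d2cL d2co mg F1 d2u d2uL d2a gm)

abbreviation "tDR \<equiv> ([Y,A], [lr [] [], ld [] []],
      [lde [Y] [], bYA [] [A], ld [A] [A], lde [A,Y,A] [], bAA [A,Y] [A], lr [A] [A,A], lmu [A,Y] [], bAY [] [A], lS [Y] [A], lmu [Y] []])"
lemma DR: "leq C [Y,A] [lr [] [], ld [] []]
      [lde [Y] [], bYA [] [A], ld [A] [A], lde [A,Y,A] [], bAA [A,Y] [A], lr [A] [A,A], lmu [A,Y] [], bAY [] [A], lS [Y] [A], lmu [Y] []]"
  by (rule run_leq[where sts="[G 0 [Y] [] (rv tCounitL), N 1 1 True ep [A] [] Y, SW 2, SW 3, N 4 0 True ep [A] [] Y, G 6 [Y] [] (rv tUnitL), F 5 (rv tAntiL), F 7 tAssoc, N 4 0 False De [A] [A,A] Y, SW 3, SW 2, N 1 1 False De [A] [A,A] Y, F 0 tCoassoc, SW 1, SW 8, SW 7, F 2 tCM]"])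
    (simp_all add: whisk_def ntr_def Let_def axs d2c d2cL d2co mg F1 d2u d2uL d2a gm F2)

abbreviation "tLB \<equiv> ([Y,A], [lr [] [], ld [] [], lS [Y] [], lr [] []],
      [bYA [] [], bAY [] [], ld [] [A], lS [Y] [A], lr [] [A], lS [Y] [], lS [Y] [], lr [] []])"
lemma LB: "leq C [Y,A] [lr [] [], ld [] [], lS [Y] [], lr [] []]
      [bYA [] [], bAY [] [], ld [] [A], lS [Y] [A], lr [] [A], lS [Y] [], lS [Y] [], lr [] []]"
  by (rule run_leq[where sts="[F 0 tDR, F 9 tF1, SW 6, SW 7, SW 8, F 9 tF1, F 14 (rv tMod), N 12 1 True mu [A,A] [A] A, F 14 (rv tMod), N 10 1 True S [A] [A] A, N 9 0 True S [A] [A] A, SW 8, SW 7, SW 6, SW 5, N 3 1 True De [A] [A,A] A, N 10 1 True S [A] [A] A, SW 11, SW 9, N 10 1 True S [A] [A] A, N 8 0 True S [A] [A] A, N 7 0 True S [A] [A] A, N 9 0 True S [A] [A] A, N 8 0 True S [A] [A] A, SW 11, SW 10, SW 9, SW 8, N 7 1 False S [A] [A] A, SW 6, SW 12, SW 11, SW 10, SW 9, N 7 1 False r [Y,A] [Y] A, SW 5, F 6 tMod, F 4 tAntiR, F 5 tModu, N 3 1 False ep [A] [] A, SW 2, SW 1, F 0 tCounitR, N 1 1 True d [Y] [Y,A] A, SW 4, SW 5, SW 3, SW 4]"])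
    (simp_all add: whisk_def ntr_def Let_def axs d2c d2cL d2co mg F1 d2u d2uL d2a gm F2 DR)

abbreviation "tLD \<equiv> ([Y], [ld [] [], lS [Y] [], lr [] [], ld [] []],
      [ld [] [], bYA [] [], bAY [] [], ld [] [A], lS [Y] [A], lr [] [A], lS [Y] [], lS [Y] []])"
lemma LD: "leq C [Y] [ld [] [], lS [Y] [], lr [] [], ld [] []]
      [ld [] [], bYA [] [], bAY [] [], ld [] [A], lS [Y] [A], lr [] [A], lS [Y] [], lS [Y] []]"
  by (rule run_leq[where sts="[F 2 tDR, F 1 tF2, SW 6, SW 5, F 4 tF2, N 8 0 False d [Y] [Y,A] A, SW 7, SW 6, SW 5, SW 4, SW 3, SW 2, SW 1, F 0 tComod, F 1 (rv tCoassoc), SW 4, N 3 0 False De [A] [A,A] A, F 2 (rv tCoassoc), SW 9, SW 10, SW 11, SW 8, SW 9, N 10 1 True S [A] [A] A, SW 6, N 7 1 True S [A] [A] A, N 8 1 True S [A] [A] Y, SW 6, SW 3, N 4 0 True De [A] [A,A] A, SW 8, SW 7, N 5 0 True De [A] [A,A] A, SW 6, SW 7, SW 8, SW 10, SW 9, F 10 tAntiR, SW 9, SW 8, SW 7, SW 6, N 5 0 False ep [A] [] A, N 4 0 False ep [A] [] A, SW 3, F 2 tCounitL, SW 7, SW 8, F 9 tUnitR, F 0 (rv tComod), N 1 0 True d [Y] [Y,A] A, N 5 1 True r [Y,A] [Y] A, SW 4, N 5 1 True S [A] [A] A, N 3 0 True S [A] [A] Y, N 4 0 True S [A] [A] A,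 N 2 1 True d [Y] [Y,A] A, SW 4, SW 5]"])
    (simp_all add: whisk_def ntr_def Let_def axs d2c d2cL d2co mg F1 d2u d2uL d2a gm F2 DR LB)

abbreviation "tG1 \<equiv> ([Y], [ld [] [], iAY [] [], lT [] [Y], lT [] [Y], iYA [] [], lr [] [], ld [] [], lS [Y] [], lr [] []],
      [])"
lemma G1: "leq C [Y] [ld [] [], iAY [] [], lT [] [Y], lT [] [Y], iYA [] [], lr [] [], ld [] [], lS [Y] [], lr [] []]
      []"
  by (rule run_leq[where sts="[F 5 tLB, F 4 (tBI Y A), N 3 0 True T [A] [A] Y, N 2 0 True T [A] [A] Y, F 1 (tBI A Y), SW 2, SW 3, SW 4, SW 1, SW 2, SW 3, F 5 tST, F 4 tST, F 0 tComod, F 3 tMod, F 1 tAntiL, F 2 tModu, F 0 tComodu]"])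
    (simp_all add: whisk_def ntr_def Let_def axs d2c d2cL d2co mg F1 d2u d2uL d2a gm F2 DR LB LD)

definition "sig = Cmp C r (Cmp C (TM C (Id C Y) S) d)"
lemma asig[simp]: "Arr C sig" "Dom C sig = Y" "Cod C sig = Y"
  by (simp_all add: sig_def)
lemma hsig[simp]: "Hom C sig Y Y" unfolding Hom_def by simp
abbreviation "lsig p q \<equiv> L p sig [Y] [Y] q"
abbreviation "tFold \<equiv> ([Y], [ld [] [], lS [Y] [], lr [] []], [lsig [] []])"
lemma sigfold: "leq C [Y] [ld [] [], lS [Y] [], lr [] []] [lsig [] []]"
proof -
  have "sem C [Y] [ld [] [], lS [Y] [], lr [] []] = sem C [Y] [lsig [] []]"
    by (simp add: cmp_assoc' sig_def)
  then show ?thesis unfolding leq_def by simp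
qed

abbreviation "tG2 \<equiv> ([Y], [ld [] [], lS [Y] [], lr [] [], ld [] [], iAY [] [], lT [] [Y], lT [] [Y], iYA [] [], lr [] []],
      [])"
lemma G2: "leq C [Y] [ld [] [], lS [Y] [], lr [] [], ld [] [], iAY [] [], lT [] [Y], lT [] [Y], iYA [] [], lr [] []]
      []"
  by (rule run_leq[where sts="[F 0 tLD, F 3 tFold, N 5 2 True S [A] [A] Y, N 4 2 True S [A] [A] Y, N 3 3 True sig [Y] [Y] A, F 6 tTS, F 5 tTS, N 4 2 True sig [Y] [Y] A, F 2 (tIB A Y), F 1 (tIB Y A), F 1 (rv tFold), F 0 tComod, F 3 tMod, F 1 tAntiL, F 2 tModu, F 0 tComodu]"])
    (simp_all add: whisk_def ntr_def Let_def axs d2c d2cL d2co mg F1 d2u d2uL d2a gm F2 DR LB LD G1 sigfold)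

abbreviation "tG3 \<equiv> ([A,Y], [lT [] [Y], iYA [] [], lr [] [], ld [] [], lS [Y] [], lr [] []],
      [ld [A] [], lS [A,Y] [], lr [A] [], lS [] [Y], bAY [] [], lr [] []])"
lemma G3: "leq C [A,Y] [lT [] [Y], iYA [] [], lr [] [], ld [] [], lS [Y] [], lr [] []]
      [ld [A] [], lS [A,Y] [], lr [A] [], lS [] [Y], bAY [] [], lr [] []]"
  by (rule run_leq[where sts="[F 2 tLB, F 1 (tBI Y A), F 2 tFold, N 1 1 False sig [Y] [Y] A, N 2 0 False S [A] [A] Y, N 3 0 False S [A] [A] Y, SW 0, F 1 tST, F 0 (rv tFold)]"])
    (simp_all add: whisk_def ntr_def Let_def axs d2c d2cL d2co mg F1 d2u d2uL d2a gm F2 DR LB LD G1 sigfold G2)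

abbreviation "tG4 \<equiv> ([Y], [ld [] [], lS [Y] [], lr [] [], ld [] [], iAY [] [], lT [] [Y]],
      [ld [] [], bYA [] [], lS [] [Y], ld [A] [], lS [A,Y] [], lr [A] []])"
lemma G4: "leq C [Y] [ld [] [], lS [Y] [], lr [] [], ld [] [], iAY [] [], lT [] [Y]]
      [ld [] [], bYA [] [], lS [] [Y], ld [A] [], lS [A,Y] [], lr [A] []]"
  by (rule run_leq[where sts="[F 0 tLD, F 3 tFold, N 5 2 True S [A] [A] Y, N 4 2 True S [A] [A] Y, N 3 3 True sig [Y] [Y] A, F 2 (tIB A Y), F 4 tTS, SW 2, F 3 (rv tFold)]"])
    (simp_all add: whisk_def ntr_def Let_def axs d2c d2cL d2co mg F1 d2u d2uL d2a gm F2 DR LB LD G1 sigfold G2 G3)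

end



theorem mainTheorem8:
  fixes C :: "('o, 'm) bmcat"
    and A Y :: 'o
    and mu eta Delta eps S Sinv mur Dr :: 'm
  assumes "braided_strict_monoidal C"
    and "braided_group C A mu eta Delta eps S"
    and "Hom C Sinv A A"
    and "Cmp C S Sinv = Id C A" and "Cmp C Sinv S = Id C A"
    and "right_crossed_module C A mu eta Delta eps Y mur Dr"
  shows "let sigma = Cmp C mur (Cmp C (TM C (Id C Y) S) Dr);
             sigmainv = Cmp C mur (Cmp C (BrInv C Y A)
                          (Cmp C (TM C (Cmp C Sinv Sinv) (Id C Y)) (Cmp C (BrInv C A Y) Dr)));
             act1 = Cmp C mur (Cmp C (BrInv C Y A) (TM C Sinv (Id C Y)));
             coact1 = Cmp C (TM C S (Id C Y)) (Cmp C (Br C Y A) Dr);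
             act2 = Cmp C mur (Cmp C (Br C A Y) (TM C S (Id C Y)));
             coact2 = Cmp C (TM C Sinv (Id C Y)) (Cmp C (BrInv C A Y) Dr)
         in Hom C sigma Y Y \<and> Hom C sigmainv Y Y \<and>
            Cmp C sigma sigmainv = Id C Y \<and> Cmp C sigmainv sigma = Id C Y \<and>
            Cmp C sigma act1 = Cmp C act2 (TM C (Id C A) sigma) \<and>
            Cmp C coact2 sigma = Cmp C (TM C (Id C A) sigma) coact1"
proof -
  interpret bg C A Y mu eta Delta eps S Sinv mur Dr
    using assms by (simp add: bg_def bsm_def bg_axioms_def)
  define Ls where "Ls = [L [] Dr [Y] [Y,A] [], L [Y] S [A] [A] [], L [] mur [Y,A] [Y] []]"
  define Lsi where "Lsi = [L [] Dr [Y] [Y,A] [], L [] (BrInv C A Y) [Y,A] [A,Y] [], L [] Sinv [A] [A] [Y], L [] Sinv [A] [A] [Y],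
      L [] (BrInv C Y A) [A,Y] [Y,A] [], L [] mur [Y,A] [Y] []]"
  define La1 where "La1 = [L [] Sinv [A] [A] [Y], L [] (BrInv C Y A) [A,Y] [Y,A] [], L [] mur [Y,A] [Y] []]"
  define La2 where "La2 = [L [] S [A] [A] [Y], L [] (Br C A Y) [A,Y] [Y,A] [], L [] mur [Y,A] [Y] []]"
  define Lc1 where "Lc1 = [L [] Dr [Y] [Y,A] [], L [] (Br C Y A) [Y,A] [A,Y] [], L [] S [A] [A] [Y]]"
  define Lc2 where "Lc2 = [L [] Dr [Y] [Y,A] [], L [] (BrInv C A Y) [Y,A] [A,Y] [], L [] Sinv [A] [A] [Y]]"
  have tt: "TM C (Cmp C Sinv Sinv) (Id C Y) = Cmp C (TM C Sinv (Id C Y)) (TM C Sinv (Id C Y))"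
    using interchange[of Sinv Sinv "Id C Y" "Id C Y"] by simp
  have es: "Cmp C mur (Cmp C (TM C (Id C Y) S) Dr) = sem C [Y] Ls" unfolding Ls_def by (simp add: cmp_assoc')
  have esi: "Cmp C mur (Cmp C (BrInv C Y A) (Cmp C (TM C (Cmp C Sinv Sinv) (Id C Y)) (Cmp C (BrInv C A Y) Dr))) = sem C [Y] Lsi"
    unfolding Lsi_def tt by (simp add: cmp_assoc')
  have ea1: "Cmp C mur (Cmp C (BrInv C Y A) (TM C Sinv (Id C Y))) = sem C [A,Y] La1" unfolding La1_def by (simp add: cmp_assoc')
  have ea2: "Cmp C mur (Cmp C (Br C A Y) (TM C S (Id C Y))) = sem C [A,Y] La2" unfolding La2_def by (simp add: cmp_assoc')
  have ec1: "Cmp C (TM C S (Id C Y)) (Cmp C (Br C Y A) Dr) = sem C [Y] Lc1" unfolding Lc1_def by (simp add: cmp_assoc')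
  have ec2: "Cmp C (TM C Sinv (Id C Y)) (Cmp C (BrInv C A Y) Dr) = sem C [Y] Lc2" unfolding Lc2_def by (simp add: cmp_assoc')
  have ws: "wfc C [Y] Ls" "endc [Y] Ls = [Y]" unfolding Ls_def by simp_all
  have wsi: "wfc C [Y] Lsi" "endc [Y] Lsi = [Y]" unfolding Lsi_def by simp_all
  have wa1: "wfc C [A,Y] La1" "endc [A,Y] La1 = [Y]" unfolding La1_def by simp_all
  have wa2: "wfc C [A,Y] La2" "endc [A,Y] La2 = [Y]" unfolding La2_def by simp_all
  have wc1: "wfc C [Y] Lc1" "endc [Y] Lc1 = [A,Y]" unfolding Lc1_def by simp_all
  have wc2: "wfc C [Y] Lc2" "endc [Y] Lc2 = [A,Y]" unfolding Lc2_def by simp_all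
  have g1: "sem C [Y] (Lsi @ Ls) = Id C Y"
    using G1 unfolding leq_def Ls_def Lsi_def by simp
  have g2: "sem C [Y] (Ls @ Lsi) = Id C Y"
    using G2 unfolding leq_def Ls_def Lsi_def by simp
  have g3: "sem C [A,Y] (La1 @ Ls) = sem C [A,Y] (whisk [A] [] Ls @ La2)"
    using G3 unfolding leq_def Ls_def La1_def La2_def by (simp add: whisk_def)
  have g4: "sem C [Y] (Ls @ Lc2) = sem C [Y] (Lc1 @ whisk [A] [] Ls)"
    using G4 unfolding leq_def Ls_def Lc1_def Lc2_def by (simp add: whisk_def)
  have sw: "sem C [A,Y] (whisk [A] [] Ls) = TM C (Id C A) (sem C [Y] Ls)"
    using sem_whisk[OF ws(1), of "[A]" "[]"] sem_hom[OF ws(1)] by simp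
  have wwa: "wfc C [A,Y] (whisk [A] [] Ls)" "endc [A,Y] (whisk [A] [] Ls) = [A,Y]"
    using wfc_whisk[OF ws(1), of "[A]" "[]"] endc_whisk[of "[A]" "[Y]" "[]" Ls] ws(2) by simp_all
  show ?thesis
    unfolding Let_def es esi ea1 ea2 ec1 ec2
  proof (intro conjI)
    show "Hom C (sem C [Y] Ls) Y Y" using sem_hom[OF ws(1)] ws(2) by (simp add: Hom_def)
    show "Hom C (sem C [Y] Lsi) Y Y" using sem_hom[OF wsi(1)] wsi(2) by (simp add: Hom_def)
    show "Cmp C (sem C [Y] Ls) (sem C [Y] Lsi) = Id C Y"
      using g1 sem_append[of "[Y]" Lsi Ls] ws wsi by (simp add: wfc_append)
    show "Cmp C (sem C [Y] Lsi) (sem C [Y] Ls) = Id C Y"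
      using g2 sem_append[of "[Y]" Ls Lsi] ws wsi by (simp add: wfc_append)
    show "Cmp C (sem C [Y] Ls) (sem C [A, Y] La1) = Cmp C (sem C [A, Y] La2) (TM C (Id C A) (sem C [Y] Ls))"
      using g3 sem_append[of "[A,Y]" La1 Ls] sem_append[of "[A,Y]" "whisk [A] [] Ls" La2] ws wa1 wa2 wwa sw
      by (simp add: wfc_append)
    show "Cmp C (sem C [Y] Lc2) (sem C [Y] Ls) = Cmp C (TM C (Id C A) (sem C [Y] Ls)) (sem C [Y] Lc1)"
    proof -
      have "sem C [A,Y] (whisk [A] [] Ls) = sem C (endc [Y] Lc1) (whisk [A] [] Ls)" using wc1 by simp
      then show ?thesis
        using g4 sem_append[of "[Y]" Ls Lc2] sem_append[of "[Y]" Lc1 "whisk [A] [] Ls"] ws wc1 wc2 wwa sw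
        by (simp add: wfc_append)
    qed
  qed
qed


end
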